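(* For every integer $d\ge3$, the set $\mathfrak P_d\subseteq\mathbb R^{2d-3}$ is an integral polytope (all its vertices lie in $\mathbb Z^{2d-3}$) with exactly $3^{d-2}$ vertices.
   Context: $\mathfrak P_d\subseteq\mathbb R^{2d-3}$ is the set of all $(x_1,\dots,x_{d-2},y_1,\dots,y_{d-2},z)\in\mathbb R^{2d-3}$ satisfying: $x_j-x_{j+1}\ge0$ and $y_j-y_{j+1}\ge0$ for $j\in\{1,\dots,d-3\}$; $x_j\ge0$, $y_j\ge0$ for $j\in\{1,\dots,d-2\}$; $j(z+d-1-j)+\sum_{i=0}^{j-2}x_{d-2-i}-\sum_{i=1}^{j}y_i\ge0$ for $j\in\{1,\dots,d-2\}$; and $\sum_{i=1}^{d-2}y_i-\sum_{i=1}^{d-2}x_i=z(d-1)$. A vertex of a polytope given by a system of linear inequalities is a point of it at which $2d-3$ linearly independent constraints are tight. *)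

theory Defs
  imports Complex_Main "HOL-Library.Function_Algebras"
begin

text \<open>Points of R^(2d-3) are encoded as functions p :: nat => real with p i = 0 for
  i >= 2d-3.  Coordinate layout: x_j = p (j-1) (j = 1..d-2),
  y_j = p (d-3+j) (j = 1..d-2), z = p (2d-4).\<close>

definition pdim :: "nat \<Rightarrow> nat" where "pdim d = 2*d - 3"
definition xi :: "nat \<Rightarrow> nat" where "xi j = j - 1"
definition yi :: "nat \<Rightarrow> nat \<Rightarrow> nat" where "yi d j = d - 3 + j"
definition zi :: "nat \<Rightarrow> nat" where "zi d = 2*d - 4"

definition ev :: "nat \<Rightarrow> nat \<Rightarrow> real" where "ev k = (\<lambda>i. if i = k then 1 else 0)"

definition lval :: "nat \<Rightarrow> (nat \<Rightarrow> real) \<times> real \<Rightarrow> (nat \<Rightarrow> real) \<Rightarrow> real" where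
  "lval d c p = (\<Sum>i<pdim d. fst c i * p i) + snd c"

definition ineqs :: "nat \<Rightarrow> ((nat \<Rightarrow> real) \<times> real) set" where
  "ineqs d =
     {(ev (xi j) - ev (xi (j+1)), 0) | j. 1 \<le> j \<and> j \<le> d - 3}
   \<union> {(ev (yi d j) - ev (yi d (j+1)), 0) | j. 1 \<le> j \<and> j \<le> d - 3}
   \<union> {(ev (xi j), 0) | j. 1 \<le> j \<and> j \<le> d - 2}
   \<union> {(ev (yi d j), 0) | j. 1 \<le> j \<and> j \<le> d - 2}
   \<union> {((\<lambda>i. real j * ev (zi d) i) + (\<Sum>i\<in>{0..<j-1}. ev (xi (d - 2 - i)))
          - (\<Sum>i\<in>{1..j}. ev (yi d i)),
        real j * (real d - 1 - real j)) | j. 1 \<le> j \<and> j \<le> d - 2}"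

definition eqc :: "nat \<Rightarrow> (nat \<Rightarrow> real) \<times> real" where
  "eqc d = ((\<Sum>i\<in>{1..d-2}. ev (yi d i)) - (\<Sum>i\<in>{1..d-2}. ev (xi i))
            - (\<lambda>i. (real d - 1) * ev (zi d) i), 0)"

definition Pd :: "nat \<Rightarrow> (nat \<Rightarrow> real) set" where
  "Pd d = {p. (\<forall>i\<ge>pdim d. p i = 0) \<and> (\<forall>c\<in>ineqs d. lval d c p \<ge> 0) \<and> lval d (eqc d) p = 0}"

definition lin_indep :: "nat \<Rightarrow> (nat \<Rightarrow> real) set \<Rightarrow> bool" where
  "lin_indep n V \<longleftrightarrow> finite V \<and>
     (\<forall>u. (\<forall>i<n. (\<Sum>v\<in>V. u v * v i) = 0) \<longrightarrow> (\<forall>v\<in>V. u v = 0))"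

definition tight :: "nat \<Rightarrow> (nat \<Rightarrow> real) \<Rightarrow> ((nat \<Rightarrow> real) \<times> real) set" where
  "tight d p = {c \<in> ineqs d. lval d c p = 0} \<union> {eqc d}"

definition vertices :: "nat \<Rightarrow> (nat \<Rightarrow> real) set" where
  "vertices d = {p \<in> Pd d. \<exists>V \<subseteq> fst ` tight d p. card V = pdim d \<and> lin_indep (pdim d) V}"

end

theory Submission
  imports Defs "Jordan_Normal_Form.Determinant" "HOL-Library.FuncSet"
begin


lemma kernel_det:
  fixes A :: "real mat"
  assumes "A \<in> carrier_mat n n"
  shows "det A \<noteq> 0 \<longleftrightarrow> (\<forall>q. (\<forall>r<n. (\<Sum>i<n. A $$ (r,i) * q i) = 0) \<longrightarrow> (\<forall>i<n. q i = 0))"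
proof -
  have "det A = 0 \<longleftrightarrow> (\<exists> v. v \<in> carrier_vec n \<and> v \<noteq> 0\<^sub>v n \<and> A *\<^sub>v v = 0\<^sub>v n)"
    by (rule det_0_iff_vec_prod_zero[OF assms])
  also have "\<dots> \<longleftrightarrow> (\<exists>q. (\<forall>r<n. (\<Sum>i<n. A $$ (r,i) * q i) = 0) \<and> (\<exists>i<n. q i \<noteq> 0))"
  proof
    assume "\<exists> v. v \<in> carrier_vec n \<and> v \<noteq> 0\<^sub>v n \<and> A *\<^sub>v v = 0\<^sub>v n"
    then obtain v where v: "v \<in> carrier_vec n" "v \<noteq> 0\<^sub>v n" "A *\<^sub>v v = 0\<^sub>v n" by blast
    have "\<forall>r<n. (\<Sum>i<n. A $$ (r,i) * v $ i) = 0"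
    proof (intro allI impI)
      fix r assume r: "r < n"
      have "(A *\<^sub>v v) $ r = 0" using v(3) r by simp
      thus "(\<Sum>i<n. A $$ (r,i) * v $ i) = 0" using r assms v(1)
        by (simp add: scalar_prod_def lessThan_atLeast0)
    qed
    moreover have "\<exists>i<n. v $ i \<noteq> 0" using v(1,2) by (auto simp: vec_eq_iff)
    ultimately show "\<exists>q. (\<forall>r<n. (\<Sum>i<n. A $$ (r,i) * q i) = 0) \<and> (\<exists>i<n. q i \<noteq> 0)"
      by (intro exI[of _ "\<lambda>i. v $ i"]) simp
  next
    assume "\<exists>q. (\<forall>r<n. (\<Sum>i<n. A $$ (r,i) * q i) = 0) \<and> (\<exists>i<n. q i \<noteq> 0)"
    then obtain q where q: "\<forall>r<n. (\<Sum>i<n. A $$ (r,i) * q i) = 0" "\<exists>i<n. q i \<noteq> 0" by blast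
    define v where "v = vec n q"
    have "v \<in> carrier_vec n" by (simp add: v_def)
    moreover have "v \<noteq> 0\<^sub>v n" using q(2) by (auto simp: v_def vec_eq_iff)
    moreover have "A *\<^sub>v v = 0\<^sub>v n"
    proof (rule eq_vecI)
      fix r assume "r < dim_vec (0\<^sub>v n :: real vec)"
      hence r: "r < n" by simp
      have "(\<Sum>i<n. A $$ (r,i) * q i) = 0" using q(1) r by blast
      thus "(A *\<^sub>v v) $ r = 0\<^sub>v n $ r" using r assms
        by (simp add: scalar_prod_def v_def lessThan_atLeast0 mult.commute)
    qed (use assms in simp)
    ultimately show "\<exists> v. v \<in> carrier_vec n \<and> v \<noteq> 0\<^sub>v n \<and> A *\<^sub>v v = 0\<^sub>v n" by blast
  qed
  finally show ?thesis by blast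
qed

lemma kernel_iff:
  assumes fin: "finite V" and cV: "card V = n"
  shows "lin_indep n V \<longleftrightarrow> (\<forall>q. (\<forall>v\<in>V. (\<Sum>i<n. v i * q i) = 0) \<longrightarrow> (\<forall>i<n. q i = 0))"
proof -
  obtain e where e: "bij_betw e {0..<n} V" using ex_bij_betw_nat_finite[OF fin] cV by auto
  define g where "g = the_inv_into {0..<n} e"
  have gb: "bij_betw g V {0..<n}" unfolding g_def by (rule bij_betw_the_inv_into[OF e])
  have eg: "\<And>v. v \<in> V \<Longrightarrow> e (g v) = v" "\<And>v. v \<in> V \<Longrightarrow> g v < n"
    using e gb unfolding g_def
    by (auto simp: f_the_inv_into_f_bij_betw dest: bij_betwE)
  have ge: "\<And>r. r < n \<Longrightarrow> g (e r) = r" using e unfolding g_def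
    by (simp add: bij_betw_def the_inv_into_f_f)
  have eV: "\<And>r. r < n \<Longrightarrow> e r \<in> V" using e by (auto simp: bij_betw_def)
  define A :: "real mat" where "A = mat n n (\<lambda>(r,i). e r i)"
  have Ac: "A \<in> carrier_mat n n" by (simp add: A_def)
  have ATc: "transpose_mat A \<in> carrier_mat n n" by (simp add: A_def)
  have reidx: "\<And>f. (\<Sum>v\<in>V. f v) = (\<Sum>r<n. f (e r))"
    using sum.reindex_bij_betw[OF e, symmetric] by (simp only: lessThan_atLeast0)
  have AT: "\<And>r i. r < n \<Longrightarrow> i < n \<Longrightarrow> transpose_mat A $$ (r, i) = e i r"
    by (simp add: A_def)
  have AA: "\<And>r i. r < n \<Longrightarrow> i < n \<Longrightarrow> A $$ (r, i) = e r i"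
    by (simp add: A_def)
  have L1: "lin_indep n V \<longleftrightarrow> (\<forall>u. (\<forall>r<n. (\<Sum>i<n. transpose_mat A $$ (r, i) * u i) = 0) \<longrightarrow> (\<forall>i<n. u i = 0))"
  proof
    assume li: "lin_indep n V"
    show "\<forall>u. (\<forall>r<n. (\<Sum>i<n. transpose_mat A $$ (r, i) * u i) = 0) \<longrightarrow> (\<forall>i<n. u i = 0)"
    proof (intro allI impI)
      fix u :: "nat \<Rightarrow> real" and i
      assume h: "\<forall>r<n. (\<Sum>i<n. transpose_mat A $$ (r, i) * u i) = 0" and i: "i < n"
      have "\<forall>j<n. (\<Sum>v\<in>V. u (g v) * v j) = 0"
      proof (intro allI impI)
        fix j assume j: "j < n"
        have "(\<Sum>v\<in>V. u (g v) * v j) = (\<Sum>r<n. u (g (e r)) * e r j)" by (rule reidx)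
        also have "\<dots> = (\<Sum>r<n. u r * e r j)" by (rule sum.cong) (simp_all add: ge)
        also have "\<dots> = (\<Sum>r<n. transpose_mat A $$ (j, r) * u r)"
          by (rule sum.cong) (simp_all add: AT j)
        also have "\<dots> = 0" using h j by blast
        finally show "(\<Sum>v\<in>V. u (g v) * v j) = 0" .
      qed
      moreover have li': "\<And>w. (\<forall>i<n. (\<Sum>v\<in>V. w v * v i) = 0) \<Longrightarrow> (\<forall>v\<in>V. w v = 0)"
        using li unfolding lin_indep_def by blast
      ultimately have "\<forall>v\<in>V. u (g v) = 0" using li'[of "\<lambda>v. u (g v)"] by simp
      hence "u (g (e i)) = 0" using eV[OF i] by blast
      thus "u i = 0" using ge[OF i] by simp
    qed
  next
    assume h: "\<forall>u. (\<forall>r<n. (\<Sum>i<n. transpose_mat A $$ (r, i) * u i) = 0) \<longrightarrow> (\<forall>i<n. u i = 0)"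
    show "lin_indep n V" unfolding lin_indep_def
    proof (intro conjI allI impI ballI)
      show "finite V" by fact
    next
      fix u :: "(nat \<Rightarrow> real) \<Rightarrow> real" and v
      assume z: "\<forall>i<n. (\<Sum>v\<in>V. u v * v i) = 0" and v: "v \<in> V"
      have "\<forall>r<n. (\<Sum>i<n. transpose_mat A $$ (r, i) * u (e i)) = 0"
      proof (intro allI impI)
        fix r assume r: "r < n"
        have "(\<Sum>i<n. transpose_mat A $$ (r, i) * u (e i)) = (\<Sum>i<n. u (e i) * e i r)"
          by (rule sum.cong) (simp_all add: AT r)
        also have "\<dots> = (\<Sum>v\<in>V. u v * v r)" by (rule reidx[symmetric])
        also have "\<dots> = 0" using z r by blast
        finally show "(\<Sum>i<n. transpose_mat A $$ (r, i) * u (e i)) = 0" .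
      qed
      hence "\<forall>i<n. u (e i) = 0" using h[rule_format, of "\<lambda>i. u (e i)"] by simp
      hence "u (e (g v)) = 0" using eg(2)[OF v] by blast
      thus "u v = 0" using eg(1)[OF v] by simp
    qed
  qed
  have L2: "(\<forall>q. (\<forall>r<n. (\<Sum>i<n. A $$ (r, i) * q i) = 0) \<longrightarrow> (\<forall>i<n. q i = 0)) \<longleftrightarrow>
      (\<forall>q. (\<forall>v\<in>V. (\<Sum>i<n. v i * q i) = 0) \<longrightarrow> (\<forall>i<n. q i = 0))"
  proof
    assume h: "\<forall>q. (\<forall>r<n. (\<Sum>i<n. A $$ (r, i) * q i) = 0) \<longrightarrow> (\<forall>i<n. q i = 0)"
    show "\<forall>q. (\<forall>v\<in>V. (\<Sum>i<n. v i * q i) = 0) \<longrightarrow> (\<forall>i<n. q i = 0)"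
    proof (rule allI, rule impI)
      fix q :: "nat \<Rightarrow> real" assume z: "\<forall>v\<in>V. (\<Sum>i<n. v i * q i) = 0"
      have "\<forall>r<n. (\<Sum>i<n. A $$ (r, i) * q i) = 0"
      proof (intro allI impI)
        fix r assume r: "r < n"
        have "(\<Sum>i<n. A $$ (r, i) * q i) = (\<Sum>i<n. e r i * q i)" by (rule sum.cong) (simp_all add: AA r)
        also have "\<dots> = 0" using z eV[OF r] by blast
        finally show "(\<Sum>i<n. A $$ (r, i) * q i) = 0" .
      qed
      thus "\<forall>i<n. q i = 0" using h by blast
    qed
  next
    assume h: "\<forall>q. (\<forall>v\<in>V. (\<Sum>i<n. v i * q i) = 0) \<longrightarrow> (\<forall>i<n. q i = 0)"
    show "\<forall>q. (\<forall>r<n. (\<Sum>i<n. A $$ (r, i) * q i) = 0) \<longrightarrow> (\<forall>i<n. q i = 0)"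
    proof (rule allI, rule impI)
      fix q :: "nat \<Rightarrow> real" assume z: "\<forall>r<n. (\<Sum>i<n. A $$ (r, i) * q i) = 0"
      have "\<forall>v\<in>V. (\<Sum>i<n. v i * q i) = 0"
      proof
        fix v assume v: "v \<in> V"
        have "(\<Sum>i<n. v i * q i) = (\<Sum>i<n. A $$ (g v, i) * q i)"
          by (rule sum.cong) (simp_all add: AA eg[OF v])
        also have "\<dots> = 0" using z eg(2)[OF v] by blast
        finally show "(\<Sum>i<n. v i * q i) = 0" .
      qed
      thus "\<forall>i<n. q i = 0" using h by blast
    qed
  qed
  have "lin_indep n V \<longleftrightarrow> det (transpose_mat A) \<noteq> 0" unfolding L1 kernel_det[OF ATc] ..
  also have "\<dots> \<longleftrightarrow> det A \<noteq> 0" using det_transpose[OF Ac] by simp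
  also have "\<dots> \<longleftrightarrow> (\<forall>q. (\<forall>v\<in>V. (\<Sum>i<n. v i * q i) = 0) \<longrightarrow> (\<forall>i<n. q i = 0))"
    unfolding kernel_det[OF Ac] L2 ..
  finally show ?thesis .
qed



definition lin :: "nat \<Rightarrow> (nat \<Rightarrow> real) \<Rightarrow> (nat \<Rightarrow> real) \<Rightarrow> real" where
  "lin d a q = (\<Sum>i<pdim d. a i * q i)"

lemma lval_lin: "lval d c p = lin d (fst c) p + snd c"
  by (simp add: lval_def lin_def)

lemma sum_fun_apply: "(sum F A) (x::nat) = (\<Sum>a\<in>A. (F a x :: real))"
  by (induction A rule: infinite_finite_induct) auto

lemma lin_ev: "k < pdim d \<Longrightarrow> lin d (ev k) q = q k"
proof -
  assume k: "k < pdim d"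
  have "lin d (ev k) q = (\<Sum>i<pdim d. if i = k then q i else 0)"
    unfolding lin_def ev_def by (rule sum.cong) auto
  also have "\<dots> = q k" using k by simp
  finally show ?thesis .
qed

lemma lin_add: "lin d (f + g) q = lin d f q + lin d g q"
  by (simp add: lin_def algebra_simps sum.distrib)

lemma lin_diff: "lin d (f - g) q = lin d f q - lin d g q"
  by (simp add: lin_def algebra_simps sum_subtractf)

lemma lin_sum: "lin d (sum F A) q = (\<Sum>a\<in>A. lin d (F a) q)"
  unfolding lin_def sum_fun_apply by (simp add: sum_distrib_right sum.swap[of _ A])

lemma lin_scale: "lin d (\<lambda>i. c * f i) q = c * lin d f q"
  by (simp add: lin_def sum_distrib_left algebra_simps)



definition Xc :: "nat \<Rightarrow> (nat \<Rightarrow> real) \<Rightarrow> nat \<Rightarrow> real" where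
  "Xc m q j = (if 1 \<le> j \<and> j \<le> m then q (j-1) else 0)"
definition Yc :: "nat \<Rightarrow> (nat \<Rightarrow> real) \<Rightarrow> nat \<Rightarrow> real" where
  "Yc m q j = (if 1 \<le> j \<and> j \<le> m then q (m-1+j) else 0)"
definition Zc :: "nat \<Rightarrow> (nat \<Rightarrow> real) \<Rightarrow> real" where
  "Zc m q = q (2*m)"
definition Cf :: "nat \<Rightarrow> (nat \<Rightarrow> real) \<Rightarrow> nat \<Rightarrow> real" where
  "Cf m q j = real j * Zc m q + (\<Sum>i\<in>{0..<j-1}. Xc m q (m-i)) - (\<Sum>i\<in>{1..j}. Yc m q i)"
definition Ac :: "nat \<Rightarrow> (nat \<Rightarrow> real) \<Rightarrow> nat \<Rightarrow> real" where
  "Ac m q k = Xc m q k - Xc m q (k+1)"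
definition Bc :: "nat \<Rightarrow> (nat \<Rightarrow> real) \<Rightarrow> nat \<Rightarrow> real" where
  "Bc m q k = Yc m q k - Yc m q (k+1)"
definition eql :: "nat \<Rightarrow> (nat \<Rightarrow> real) \<Rightarrow> real" where
  "eql m q = (\<Sum>i\<in>{1..m}. Yc m q i) - (\<Sum>i\<in>{1..m}. Xc m q i) - (real m + 1) * Zc m q"

definition nC :: "nat \<Rightarrow> nat \<Rightarrow> nat \<Rightarrow> real" where
  "nC d j = (\<lambda>i. real j * ev (zi d) i) + (\<Sum>i\<in>{0..<j-1}. ev (xi (d - 2 - i)))
          - (\<Sum>i\<in>{1..j}. ev (yi d i))"

lemma pdim_m: "d = m + 2 \<Longrightarrow> pdim d = 2*m+1" by (simp add: pdim_def)

lemma lin_xi: "d = m+2 \<Longrightarrow> 1 \<le> j \<Longrightarrow> j \<le> m \<Longrightarrow> lin d (ev (xi j)) q = Xc m q j"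
  by (simp add: lin_ev pdim_m xi_def Xc_def)
lemma lin_yi: "d = m+2 \<Longrightarrow> 1 \<le> j \<Longrightarrow> j \<le> m \<Longrightarrow> lin d (ev (yi d j)) q = Yc m q j"
  by (simp add: lin_ev pdim_m yi_def Yc_def)
lemma lin_zi: "d = m+2 \<Longrightarrow> lin d (ev (zi d)) q = Zc m q"
  by (simp add: lin_ev pdim_m zi_def Zc_def)

lemma lin_nA: "d = m+2 \<Longrightarrow> 1 \<le> j \<Longrightarrow> j < m \<Longrightarrow> lin d (ev (xi j) - ev (xi (j+1))) q = Ac m q j"
  by (simp add: lin_diff lin_xi Ac_def)
lemma lin_nB: "d = m+2 \<Longrightarrow> 1 \<le> j \<Longrightarrow> j < m \<Longrightarrow> lin d (ev (yi d j) - ev (yi d (j+1))) q = Bc m q j"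
  by (simp add: lin_diff lin_yi Bc_def)

lemma lin_nC: "d = m+2 \<Longrightarrow> 1 \<le> j \<Longrightarrow> j \<le> m \<Longrightarrow> lin d (nC d j) q = Cf m q j"
proof -
  assume d: "d = m+2" and j: "1 \<le> j" "j \<le> m"
  have 1: "(\<Sum>i\<in>{0..<j-1}. lin d (ev (xi (d - 2 - i))) q) = (\<Sum>i\<in>{0..<j-1}. Xc m q (m-i))"
    by (rule sum.cong) (use d j in \<open>auto simp: lin_xi\<close>)
  have 2: "(\<Sum>i\<in>{1..j}. lin d (ev (yi d i)) q) = (\<Sum>i\<in>{1..j}. Yc m q i)"
    by (rule sum.cong) (use d j in \<open>auto simp: lin_yi\<close>)
  show ?thesis unfolding nC_def lin_diff lin_add lin_sum lin_scale lin_zi[OF d] 1 2 Cf_def ..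
qed

lemma lin_eqc: "d = m+2 \<Longrightarrow> lin d (fst (eqc d)) q = eql m q"
proof -
  assume d: "d = m+2"
  have 1: "(\<Sum>i\<in>{1..d-2}. lin d (ev (xi i)) q) = (\<Sum>i\<in>{1..m}. Xc m q i)"
    by (rule sum.cong) (use d in \<open>auto simp: lin_xi\<close>)
  have 2: "(\<Sum>i\<in>{1..d-2}. lin d (ev (yi d i)) q) = (\<Sum>i\<in>{1..m}. Yc m q i)"
    by (rule sum.cong) (use d in \<open>auto simp: lin_yi\<close>)
  have 3: "real d - 1 = real m + 1" using d by simp
  show ?thesis unfolding eqc_def fst_conv lin_diff lin_sum lin_scale lin_zi[OF d] 1 2 3 eql_def ..
qed

lemma snd_eqc: "snd (eqc d) = 0" by (simp add: eqc_def)

lemma ineqs_cases: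
  assumes d: "d = m+2" and c: "c \<in> ineqs d"
  shows "(\<exists>j. 1\<le>j \<and> j<m \<and> snd c = 0 \<and> (\<forall>q. lin d (fst c) q = Ac m q j)) \<or>
         (\<exists>j. 1\<le>j \<and> j<m \<and> snd c = 0 \<and> (\<forall>q. lin d (fst c) q = Bc m q j)) \<or>
         (\<exists>j. 1\<le>j \<and> j\<le>m \<and> snd c = 0 \<and> (\<forall>q. lin d (fst c) q = Xc m q j)) \<or>
         (\<exists>j. 1\<le>j \<and> j\<le>m \<and> snd c = 0 \<and> (\<forall>q. lin d (fst c) q = Yc m q j)) \<or>
         (\<exists>j. 1\<le>j \<and> j\<le>m \<and> snd c = real j * (real m + 1 - real j) \<and> (\<forall>q. lin d (fst c) q = Cf m q j))"
proof -
  have dm: "d - 3 = m - 1" "d - 2 = m" using d by auto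
  from c show ?thesis unfolding ineqs_def dm
  proof (elim UnE CollectE exE conjE)
    fix j assume "c = (ev (xi j) - ev (xi (j + 1)), 0)" "1 \<le> j" "j \<le> m - 1"
    thus ?thesis using lin_nA[OF d] by auto
  next
    fix j assume "c = (ev (yi d j) - ev (yi d (j + 1)), 0)" "1 \<le> j" "j \<le> m - 1"
    thus ?thesis using lin_nB[OF d] by auto
  next
    fix j assume "c = (ev (xi j), 0)" "1 \<le> j" "j \<le> m"
    thus ?thesis using lin_xi[OF d] by auto
  next
    fix j assume "c = (ev (yi d j), 0)" "1 \<le> j" "j \<le> m"
    thus ?thesis using lin_yi[OF d] by auto
  next
    fix j assume h: "c = ((\<lambda>i. real j * ev (zi d) i) + (\<Sum>i\<in>{0..<j-1}. ev (xi (m - i)))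
          - (\<Sum>i\<in>{1..j}. ev (yi d i)), real j * (real d - 1 - real j))" "1 \<le> j" "j \<le> m"
    have "c = (nC d j, real j * (real m + 1 - real j))" using h(1) d by (simp add: nC_def)
    thus ?thesis using lin_nC[OF d] h(2,3) by auto
  qed
qed

lemma mem_nA: "d = m+2 \<Longrightarrow> 1 \<le> j \<Longrightarrow> j < m \<Longrightarrow> (ev (xi j) - ev (xi (j+1)), 0) \<in> ineqs d"
  unfolding ineqs_def by auto
lemma mem_nB: "d = m+2 \<Longrightarrow> 1 \<le> j \<Longrightarrow> j < m \<Longrightarrow> (ev (yi d j) - ev (yi d (j+1)), 0) \<in> ineqs d"
  unfolding ineqs_def by auto
lemma mem_nX: "d = m+2 \<Longrightarrow> 1 \<le> j \<Longrightarrow> j \<le> m \<Longrightarrow> (ev (xi j), 0) \<in> ineqs d"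
  unfolding ineqs_def by auto
lemma mem_nY: "d = m+2 \<Longrightarrow> 1 \<le> j \<Longrightarrow> j \<le> m \<Longrightarrow> (ev (yi d j), 0) \<in> ineqs d"
  unfolding ineqs_def by auto
lemma mem_nC: "d = m+2 \<Longrightarrow> 1 \<le> j \<Longrightarrow> j \<le> m \<Longrightarrow> (nC d j, real j * (real m + 1 - real j)) \<in> ineqs d"
  unfolding ineqs_def nC_def
  apply (rule UnI2) apply (rule CollectI) apply (rule exI[of _ j]) by simp



lemma Cf_0: "Cf m q 0 = 0" by (simp add: Cf_def)

lemma Cf_Suc: "Cf m q (Suc j) = Cf m q j + Zc m q + Xc m q (m + 1 - j) - Yc m q (Suc j)"
proof -
  have y: "(\<Sum>i\<in>{1..Suc j}. Yc m q i) = (\<Sum>i\<in>{1..j}. Yc m q i) + Yc m q (Suc j)"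
    by (simp add: sum.cl_ivl_Suc)
  have x: "(\<Sum>i\<in>{0..<j}. Xc m q (m-i)) = (\<Sum>i\<in>{0..<j-1}. Xc m q (m-i)) + Xc m q (m + 1 - j)"
  proof (cases j)
    case 0 thus ?thesis by (simp add: Xc_def)
  next
    case (Suc k)
    have "m - k = m + 1 - j" using Suc by simp
    thus ?thesis using Suc by simp
  qed
  have r: "real (Suc j) = real j + 1" by simp
  have "Cf m q (Suc j) = real (Suc j) * Zc m q + (\<Sum>i\<in>{0..<j}. Xc m q (m-i)) - (\<Sum>i\<in>{1..Suc j}. Yc m q i)"
    unfolding Cf_def by simp
  also have "\<dots> = Cf m q j + Zc m q + Xc m q (m + 1 - j) - Yc m q (Suc j)"
    unfolding x y r Cf_def by (simp add: distrib_right)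
  finally show ?thesis .
qed

lemma rev_sum: fixes g :: "nat \<Rightarrow> real" shows "(\<Sum>i\<in>{0..<n}. g (n - i)) = (\<Sum>k\<in>{1..n}. g k)"
proof -
  have "(\<Sum>i\<in>{0..<n}. g (n - i)) = (\<Sum>i\<in>{Suc 0..n}. g (n - (n + 0 - i)))"
    by (rule sum.atLeastLessThan_rev_at_least_Suc_atMost)
  also have "\<dots> = (\<Sum>k\<in>{1..n}. g k)" by (rule sum.cong) auto
  finally show ?thesis .
qed

lemma Cf_closed: "Cf m q j = real j * Zc m q + (\<Sum>i\<in>{0..<j}. Xc m q (m+1-i)) - (\<Sum>i\<in>{1..j}. Yc m q i)"
proof (induction j)
  case 0 thus ?case by (simp add: Cf_0)
next
  case (Suc j) thus ?case by (simp add: Cf_Suc algebra_simps)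
qed

lemma Cf_top: "Cf m q (m+1) = - eql m q"
proof -
  have "(\<Sum>i\<in>{0..<m+1}. Xc m q (m+1-i)) = (\<Sum>k\<in>{1..m+1}. Xc m q k)" by (rule rev_sum)
  also have "\<dots> = (\<Sum>k\<in>{1..m}. Xc m q k)" by (simp add: Xc_def)
  finally have 1: "(\<Sum>i\<in>{0..<m+1}. Xc m q (m+1-i)) = (\<Sum>k\<in>{1..m}. Xc m q k)" .
  have 2: "(\<Sum>i\<in>{1..m+1}. Yc m q i) = (\<Sum>k\<in>{1..m}. Yc m q k)" by (simp add: Yc_def)
  show ?thesis unfolding Cf_closed 1 2 eql_def by (simp add: algebra_simps)
qed

lemma Cf_1: "Cf m q 1 = Zc m q - Yc m q 1"
  using Cf_Suc[of m q 0] by (simp add: Cf_0 Xc_def)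

lemma Cf_m: "Cf m q m = - eql m q - Zc m q - Xc m q 1"
  using Cf_Suc[of m q m] Cf_top[of m q] by (simp add: Yc_def)

lemma KI: assumes "1 \<le> j" "j \<le> m"
  shows "Cf m q (j+1) - 2 * Cf m q j + Cf m q (j-1) = Ac m q (m+1-j) + Bc m q j"
proof -
  obtain k where k: "j = Suc k" using assms by (cases j) auto
  have "m + 1 - j + 1 = m + 1 - k" using k assms by simp
  thus ?thesis using k by (simp add: Cf_Suc Ac_def Bc_def algebra_simps)
qed

lemma X_tele: assumes "1 \<le> j" "j \<le> m + 1" shows "Xc m q j = (\<Sum>k\<in>{j..m}. Ac m q k)"
proof -
  have "(\<Sum>k\<in>{j..m}. Ac m q k) = - (\<Sum>k\<in>{j..m}. Xc m q (Suc k) - Xc m q k)"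
    by (simp add: Ac_def sum_negf[symmetric])
  also have "\<dots> = Xc m q j - Xc m q (Suc m)" using sum_Suc_diff[of j m "Xc m q"] assms by simp
  finally show ?thesis by (simp add: Xc_def)
qed

lemma Y_tele: assumes "1 \<le> j" "j \<le> m + 1" shows "Yc m q j = (\<Sum>k\<in>{j..m}. Bc m q k)"
proof -
  have "(\<Sum>k\<in>{j..m}. Bc m q k) = - (\<Sum>k\<in>{j..m}. Yc m q (Suc k) - Yc m q k)"
    by (simp add: Bc_def sum_negf[symmetric])
  also have "\<dots> = Yc m q j - Yc m q (Suc m)" using sum_Suc_diff[of j m "Yc m q"] assms by simp
  finally show ?thesis by (simp add: Yc_def)
qed

definition mk :: "nat \<Rightarrow> (nat \<Rightarrow> real) \<Rightarrow> (nat \<Rightarrow> real) \<Rightarrow> real \<Rightarrow> nat \<Rightarrow> real" where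
  "mk m xs ys z = (\<lambda>i. if i < m then xs (i+1) else if i < 2*m then ys (i+1-m) else if i = 2*m then z else 0)"

lemma X_mk: "1 \<le> j \<Longrightarrow> j \<le> m \<Longrightarrow> Xc m (mk m xs ys z) j = xs j"
  by (auto simp add: Xc_def mk_def)
lemma Y_mk: "1 \<le> j \<Longrightarrow> j \<le> m \<Longrightarrow> Yc m (mk m xs ys z) j = ys j"
  by (auto simp add: Yc_def mk_def)
lemma Z_mk: "Zc m (mk m xs ys z) = z"
  by (simp add: Zc_def mk_def)

lemma q_coords: assumes "i < 2*m+1" "m \<ge> 1"
  shows "q i = (if i < m then Xc m q (i+1) else if i < 2*m then Yc m q (i+1-m) else Zc m q)"
proof -
  have "i < m \<or> (m \<le> i \<and> i < 2*m) \<or> i = 2*m" using assms by linarith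
  thus ?thesis using assms by (auto simp: Xc_def Yc_def Zc_def)
qed

lemma harm_le:
  fixes h :: "nat \<Rightarrow> real"
  assumes B0: "0 \<in> B" and BN: "N \<in> B" and hB: "\<forall>j\<in>B. j \<le> N \<longrightarrow> h j = 0"
    and hh: "\<forall>j. 0<j \<longrightarrow> j<N \<longrightarrow> j \<notin> B \<longrightarrow> h (j-1) + h (j+1) = 2 * h j"
  shows "\<forall>j\<le>N. h j \<le> 0"
proof (rule ccontr)
  assume "\<not> (\<forall>j\<le>N. h j \<le> 0)"
  then obtain j1 where j1: "j1 \<le> N" "h j1 > 0" by force
  define M where "M = Max (h ` {0..N})"
  have Mge: "\<And>j. j \<le> N \<Longrightarrow> h j \<le> M" unfolding M_def by (rule Max_ge) auto
  have "M \<in> h ` {0..N}" unfolding M_def by (rule Max_in) auto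
  then obtain j2 where j2: "j2 \<le> N" "h j2 = M" by auto
  define j0 where "j0 = (LEAST j. j \<le> N \<and> h j = M)"
  have j0: "j0 \<le> N \<and> h j0 = M" unfolding j0_def by (rule LeastI[of _ j2]) (use j2 in auto)
  have Mpos: "M > 0" using Mge[OF j1(1)] j1(2) by simp
  have "j0 \<notin> B" using hB j0 Mpos by auto
  have "j0 \<noteq> 0" using B0 \<open>j0 \<notin> B\<close> by metis
  have "j0 \<noteq> N" using BN \<open>j0 \<notin> B\<close> by metis
  note this \<open>j0 \<noteq> 0\<close>
  hence j0r: "0 < j0" "j0 < N" using j0 by auto
  have "h (j0-1) + h (j0+1) = 2 * M" using hh j0r \<open>j0 \<notin> B\<close> j0 by auto
  moreover have "h (j0-1) \<le> M" "h (j0+1) \<le> M" using Mge j0r by auto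
  ultimately have "h (j0 - 1) = M" by simp
  moreover have "\<not> (j0 - 1 \<le> N \<and> h (j0-1) = M)" unfolding j0_def
    by (rule not_less_Least) (use j0r j0_def in simp)
  ultimately show False using j0r by simp
qed

lemma harm_zero:
  fixes h :: "nat \<Rightarrow> real"
  assumes B0: "0 \<in> B" and BN: "N \<in> B" and hB: "\<forall>j\<in>B. j \<le> N \<longrightarrow> h j = 0"
    and hh: "\<forall>j. 0<j \<longrightarrow> j<N \<longrightarrow> j \<notin> B \<longrightarrow> h (j-1) + h (j+1) = 2 * h j"
  shows "\<forall>j\<le>N. h j = 0"
proof -
  have 1: "\<forall>j\<le>N. h j \<le> 0" by (rule harm_le[OF B0 BN hB hh])
  have hh': "\<forall>j. 0<j \<longrightarrow> j<N \<longrightarrow> j \<notin> B \<longrightarrow> (- h (j-1)) + (- h (j+1)) = 2 * (- h j)"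
  proof (intro allI impI)
    fix j assume "0 < j" "j < N" "j \<notin> B"
    hence "h (j-1) + h (j+1) = 2 * h j" using hh by blast
    thus "(- h (j-1)) + (- h (j+1)) = 2 * (- h j)" by simp
  qed
  have 2: "\<forall>j\<le>N. - h j \<le> 0"
    by (rule harm_le[OF B0 BN, of "\<lambda>j. - h j", OF _ hh']) (use hB in auto)
  show ?thesis using 1 2 by force
qed

lemma harm_eq:
  fixes f g :: "nat \<Rightarrow> real"
  assumes B0: "0 \<in> B" and BN: "N \<in> B" and hB: "\<forall>j\<in>B. j \<le> N \<longrightarrow> f j = g j"
    and hh: "\<forall>j. 0<j \<longrightarrow> j<N \<longrightarrow> j \<notin> B \<longrightarrow> f (j+1) - 2 * f j + f (j-1) = g (j+1) - 2 * g j + g (j-1)"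
  shows "\<forall>j\<le>N. f j = g j"
proof -
  have "\<forall>j\<le>N. f j - g j = 0"
    by (rule harm_zero[OF B0 BN, of "\<lambda>j. f j - g j"]) (use hB hh in \<open>auto simp: algebra_simps\<close>)
  thus ?thesis by simp
qed



definition Lo :: "nat \<Rightarrow> nat set \<Rightarrow> nat \<Rightarrow> nat" where
  "Lo m S j = Max {s \<in> insert 0 S. s \<le> j}"
definition Hi :: "nat \<Rightarrow> nat set \<Rightarrow> nat \<Rightarrow> nat" where
  "Hi m S j = Min {s \<in> insert (m+1) S. j \<le> s}"
definition psi :: "nat \<Rightarrow> nat set \<Rightarrow> nat \<Rightarrow> real" where
  "psi m S j = (real j - real (Lo m S j)) * (real (Hi m S j) - real j)"
definition cc :: "nat \<Rightarrow> nat set \<Rightarrow> nat \<Rightarrow> real" where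
  "cc m S k = real (Hi m S (k+1)) - real (Lo m S (k-1))"

context
  fixes m :: nat and S :: "nat set"
  assumes S: "S \<subseteq> {1..m}"
begin

lemma finS: "finite S" using S finite_subset by blast

lemma Lo_fin: "finite {s \<in> insert 0 S. s \<le> j}"
  by (rule finite_subset[of _ "{..j}"]) auto

lemma Lo_props: "Lo m S j \<le> j \<and> Lo m S j \<in> insert 0 S"
proof -
  have "Lo m S j \<in> {s \<in> insert 0 S. s \<le> j}" unfolding Lo_def by (rule Max_in[OF Lo_fin]) auto
  thus ?thesis by auto
qed

lemma Lo_ge: "s \<in> insert 0 S \<Longrightarrow> s \<le> j \<Longrightarrow> s \<le> Lo m S j"
  unfolding Lo_def by (rule Max_ge[OF Lo_fin]) auto

lemma Lo_self: "j \<in> insert 0 S \<Longrightarrow> Lo m S j = j"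
  using Lo_props[of j] Lo_ge[of j j] by auto

lemma Lo_step: "1 \<le> j \<Longrightarrow> j \<notin> S \<Longrightarrow> Lo m S j = Lo m S (j-1)"
proof -
  assume j: "1 \<le> j" "j \<notin> S"
  have "{s \<in> insert 0 S. s \<le> j} = {s \<in> insert 0 S. s \<le> j - 1}"
  proof (intro Set.set_eqI)
    fix x show "x \<in> {s \<in> insert 0 S. s \<le> j} \<longleftrightarrow> x \<in> {s \<in> insert 0 S. s \<le> j - 1}"
      using j by (cases "x = j") auto
  qed
  thus ?thesis unfolding Lo_def by simp
qed

lemma Hi_fin: "finite {s \<in> insert (m+1) S. j \<le> s}"
  using finS by auto

lemma Hi_props: "j \<le> m+1 \<Longrightarrow> j \<le> Hi m S j \<and> Hi m S j \<in> insert (m+1) S \<and> Hi m S j \<le> m+1"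
proof -
  assume j: "j \<le> m+1"
  have "Hi m S j \<in> {s \<in> insert (m+1) S. j \<le> s}" unfolding Hi_def
    by (rule Min_in[OF Hi_fin]) (use j in auto)
  thus ?thesis using S by auto
qed

lemma Hi_le: "s \<in> insert (m+1) S \<Longrightarrow> j \<le> s \<Longrightarrow> Hi m S j \<le> s"
  unfolding Hi_def by (rule Min_le[OF Hi_fin]) auto

lemma Hi_self: "j \<in> insert (m+1) S \<Longrightarrow> Hi m S j = j"
  using Hi_props[of j] Hi_le[of j j] S by fastforce

lemma Hi_step: "j \<le> m \<Longrightarrow> j \<notin> S \<Longrightarrow> Hi m S j = Hi m S (j+1)"
proof -
  assume j: "j \<le> m" "j \<notin> S"
  have "{s \<in> insert (m+1) S. j \<le> s} = {s \<in> insert (m+1) S. j + 1 \<le> s}"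
  proof (intro Set.set_eqI)
    fix x show "x \<in> {s \<in> insert (m+1) S. j \<le> s} \<longleftrightarrow> x \<in> {s \<in> insert (m+1) S. j + 1 \<le> s}"
      using j by (cases "x = j") auto
  qed
  thus ?thesis unfolding Hi_def by simp
qed

lemma psi_zero: "j \<in> insert 0 (insert (m+1) S) \<Longrightarrow> psi m S j = 0"
  unfolding psi_def using Lo_self[of j] Hi_self[of j] by auto

lemma psi_nonneg: "j \<le> m+1 \<Longrightarrow> psi m S j \<ge> 0"
  unfolding psi_def using Lo_props[of j] Hi_props[of j] by simp

lemma psi_int: "psi m S j \<in> \<int>"
  unfolding psi_def by simp

lemma cc_int: "cc m S j \<in> \<int>"
  unfolding cc_def by simp

lemma cc_pos: "k \<in> S \<Longrightarrow> cc m S k > 0"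
proof -
  assume k: "k \<in> S"
  hence "k + 1 \<le> m + 1" using S by auto
  hence "k+1 \<le> Hi m S (k+1)" using Hi_props by blast
  moreover have "Lo m S (k-1) \<le> k - 1" using Lo_props by blast
  ultimately show ?thesis unfolding cc_def by linarith
qed

lemma psi_Delta:
  assumes j: "1 \<le> j" "j \<le> m"
  shows "psi m S (j+1) - 2 * psi m S j + psi m S (j-1) = (if j \<in> S then cc m S j - 2 else -2)"
proof -
  have pm: "psi m S (j-1) = (real (j-1) - real (Lo m S (j-1))) * (real (Hi m S j) - real (j-1))"
  proof (cases "j - 1 \<in> insert 0 S")
    case True thus ?thesis unfolding psi_def using Lo_self[OF True] by simp
  next
    case False
    hence "Hi m S (j-1) = Hi m S j" using Hi_step[of "j-1"] j by auto
    thus ?thesis unfolding psi_def by simp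
  qed
  have pp: "psi m S (j+1) = (real (j+1) - real (Lo m S j)) * (real (Hi m S (j+1)) - real (j+1))"
  proof (cases "j + 1 \<in> insert (m+1) S")
    case True thus ?thesis unfolding psi_def using Hi_self[OF True] by simp
  next
    case False
    hence "Lo m S (j+1) = Lo m S j" using Lo_step[of "j+1"] j by auto
    thus ?thesis unfolding psi_def by simp
  qed
  have pj: "psi m S j = (real j - real (Lo m S j)) * (real (Hi m S j) - real j)"
    by (simp add: psi_def)
  show ?thesis
  proof (cases "j \<in> S")
    case True
    have "Lo m S j = j" "Hi m S j = j" using True Lo_self Hi_self by auto
    thus ?thesis using True j unfolding pm pp pj cc_def by (simp add: algebra_simps)
  next
    case False
    have "Lo m S j = Lo m S (j-1)" "Hi m S j = Hi m S (j+1)" using False Lo_step Hi_step j by auto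
    thus ?thesis using False j unfolding pm pp pj cc_def
      by (simp add: algebra_simps of_nat_diff)
  qed
qed

end



lemma Pd_facts:
  assumes d: "d = m+2" and m: "m \<ge> 1" and p: "p \<in> Pd d"
  shows "\<forall>i\<ge>2*m+1. p i = 0"
    and "\<And>k. 1 \<le> k \<Longrightarrow> k \<le> m \<Longrightarrow> Ac m p k \<ge> 0"
    and "\<And>k. 1 \<le> k \<Longrightarrow> k \<le> m \<Longrightarrow> Bc m p k \<ge> 0"
    and "\<And>k. 1 \<le> k \<Longrightarrow> k \<le> m \<Longrightarrow> Xc m p k \<ge> 0"
    and "\<And>k. 1 \<le> k \<Longrightarrow> k \<le> m \<Longrightarrow> Yc m p k \<ge> 0"
    and "\<And>j. 1 \<le> j \<Longrightarrow> j \<le> m \<Longrightarrow> Cf m p j + real j * (real m + 1 - real j) \<ge> 0"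
    and "eql m p = 0"
proof -
  have all: "\<And>c. c \<in> ineqs d \<Longrightarrow> lin d (fst c) p + snd c \<ge> 0"
    using p unfolding Pd_def by (auto simp: lval_lin)
  show "\<forall>i\<ge>2*m+1. p i = 0" using p d unfolding Pd_def pdim_def by auto
  show X: "\<And>k. 1 \<le> k \<Longrightarrow> k \<le> m \<Longrightarrow> Xc m p k \<ge> 0"
    using all[OF mem_nX[OF d]] lin_xi[OF d] by fastforce
  show Y: "\<And>k. 1 \<le> k \<Longrightarrow> k \<le> m \<Longrightarrow> Yc m p k \<ge> 0"
    using all[OF mem_nY[OF d]] lin_yi[OF d] by fastforce
  show "\<And>k. 1 \<le> k \<Longrightarrow> k \<le> m \<Longrightarrow> Ac m p k \<ge> 0"
  proof -
    fix k assume k: "1 \<le> k" "k \<le> m"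
    show "Ac m p k \<ge> 0"
    proof (cases "k < m")
      case True thus ?thesis using all[OF mem_nA[OF d k(1) True]] lin_nA[OF d k(1) True] by simp
    next
      case False hence "k = m" using k by simp
      thus ?thesis using X[OF k] by (simp add: Ac_def Xc_def)
    qed
  qed
  show "\<And>k. 1 \<le> k \<Longrightarrow> k \<le> m \<Longrightarrow> Bc m p k \<ge> 0"
  proof -
    fix k assume k: "1 \<le> k" "k \<le> m"
    show "Bc m p k \<ge> 0"
    proof (cases "k < m")
      case True thus ?thesis using all[OF mem_nB[OF d k(1) True]] lin_nB[OF d k(1) True] by simp
    next
      case False hence "k = m" using k by simp
      thus ?thesis using Y[OF k] by (simp add: Bc_def Yc_def)
    qed
  qed
  show "\<And>j. 1 \<le> j \<Longrightarrow> j \<le> m \<Longrightarrow> Cf m p j + real j * (real m + 1 - real j) \<ge> 0"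
    using all[OF mem_nC[OF d]] lin_nC[OF d] by fastforce
  show "eql m p = 0" using p lin_eqc[OF d] unfolding Pd_def by (simp add: lval_lin snd_eqc)
qed

lemma Pd_intro:
  assumes d: "d = m+2" and m: "m \<ge> 1"
    and z: "\<forall>i\<ge>2*m+1. p i = 0"
    and A: "\<And>k. 1 \<le> k \<Longrightarrow> k \<le> m \<Longrightarrow> Ac m p k \<ge> 0"
    and B: "\<And>k. 1 \<le> k \<Longrightarrow> k \<le> m \<Longrightarrow> Bc m p k \<ge> 0"
    and X: "\<And>k. 1 \<le> k \<Longrightarrow> k \<le> m \<Longrightarrow> Xc m p k \<ge> 0"
    and Y: "\<And>k. 1 \<le> k \<Longrightarrow> k \<le> m \<Longrightarrow> Yc m p k \<ge> 0"
    and C: "\<And>j. 1 \<le> j \<Longrightarrow> j \<le> m \<Longrightarrow> Cf m p j + real j * (real m + 1 - real j) \<ge> 0"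
    and E: "eql m p = 0"
  shows "p \<in> Pd d"
  unfolding Pd_def
proof (intro CollectI conjI ballI)
  show "\<forall>i\<ge>pdim d. p i = 0" using z d by (simp add: pdim_def)
  show "lval d (eqc d) p = 0" using E by (simp add: lval_lin snd_eqc lin_eqc[OF d])
next
  fix c assume c: "c \<in> ineqs d"
  show "0 \<le> lval d c p" unfolding lval_lin
    using ineqs_cases[OF d c] A B X Y C by fastforce
qed

lemma Pd_bound:
  assumes d: "d = m+2" and m: "m \<ge> 1" and p: "p \<in> Pd d"
  shows "\<bar>p i\<bar> \<le> 2 * real m"
proof -
  note F = Pd_facts[OF d m p]
  have c1: "Cf m p 1 + real m \<ge> 0" using F(6)[of 1] m by simp
  have cm: "Cf m p m + real m \<ge> 0" using F(6)[of m] m by simp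
  have Z1: "Zc m p - Yc m p 1 + real m \<ge> 0" using c1 Cf_1[of m p] by linarith
  have Z2: "- Zc m p - Xc m p 1 + real m \<ge> 0" using cm F(7) by (simp add: Cf_m)
  have X1: "Xc m p 1 \<ge> 0" "Yc m p 1 \<ge> 0" using F(4,5)[of 1] m by auto
  have Xb: "\<And>j. 1 \<le> j \<Longrightarrow> j \<le> m \<Longrightarrow> Xc m p j \<le> Xc m p 1"
  proof -
    fix j assume j: "1 \<le> j" "j \<le> m"
    have "Xc m p j = (\<Sum>k\<in>{j..m}. Ac m p k)" using X_tele j by simp
    also have "\<dots> \<le> (\<Sum>k\<in>{1..m}. Ac m p k)"
      by (rule sum_mono2) (use j F(2) in auto)
    also have "\<dots> = Xc m p 1" using X_tele[of 1 m p] m by simp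
    finally show "Xc m p j \<le> Xc m p 1" .
  qed
  have Yb: "\<And>j. 1 \<le> j \<Longrightarrow> j \<le> m \<Longrightarrow> Yc m p j \<le> Yc m p 1"
  proof -
    fix j assume j: "1 \<le> j" "j \<le> m"
    have "Yc m p j = (\<Sum>k\<in>{j..m}. Bc m p k)" using Y_tele j by simp
    also have "\<dots> \<le> (\<Sum>k\<in>{1..m}. Bc m p k)"
      by (rule sum_mono2) (use j F(3) in auto)
    also have "\<dots> = Yc m p 1" using Y_tele[of 1 m p] m by simp
    finally show "Yc m p j \<le> Yc m p 1" .
  qed
  show ?thesis
  proof (cases "i < 2*m+1")
    case False thus ?thesis using F(1) by simp
  next
    case True
    show ?thesis
    proof (cases "i < m")
      case True
      thus ?thesis using q_coords[OF \<open>i < 2*m+1\<close> m, of p] Xb[of "i+1"] F(4)[of "i+1"] Z1 Z2 X1 by simp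
    next
      case i2: False
      show ?thesis
      proof (cases "i < 2*m")
        case True
        have ii: "1 \<le> i+1-m" "i+1-m \<le> m" using True i2 by auto
        have pe: "p i = Yc m p (i+1-m)" using q_coords[OF \<open>i < 2*m+1\<close> m, of p] i2 True by simp
        show ?thesis using pe Yb[OF ii] F(5)[OF ii] Z1 Z2 X1 unfolding abs_le_iff by linarith
      next
        case False
        thus ?thesis using q_coords[OF \<open>i < 2*m+1\<close> m, of p] i2 Z1 Z2 X1 by simp
      qed
    qed
  qed
qed

definition mkab :: "nat \<Rightarrow> (nat \<Rightarrow> real) \<Rightarrow> (nat \<Rightarrow> real) \<Rightarrow> nat \<Rightarrow> real" where
  "mkab m \<alpha> \<beta> = (let xs = (\<lambda>j. \<Sum>i\<in>{1..m+1-j}. \<alpha> i); ys = (\<lambda>j. \<Sum>i\<in>{j..m}. \<beta> i) in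
     mk m xs ys (((\<Sum>j\<in>{1..m}. ys j) - (\<Sum>j\<in>{1..m}. xs j)) / (real m + 1)))"

context fixes m :: nat and \<alpha> \<beta> :: "nat \<Rightarrow> real" assumes m: "m \<ge> 1"
begin

lemma mkab_X: "1 \<le> j \<Longrightarrow> j \<le> m+1 \<Longrightarrow> Xc m (mkab m \<alpha> \<beta>) j = (\<Sum>i\<in>{1..m+1-j}. \<alpha> i)"
proof -
  assume j: "1 \<le> j" "j \<le> m+1"
  show ?thesis
  proof (cases "j = m+1")
    case True thus ?thesis by (simp add: Xc_def)
  next
    case False hence "j \<le> m" using j by simp
    thus ?thesis unfolding mkab_def Let_def using j X_mk by blast
  qed
qed

lemma mkab_Y: "1 \<le> j \<Longrightarrow> j \<le> m+1 \<Longrightarrow> Yc m (mkab m \<alpha> \<beta>) j = (\<Sum>i\<in>{j..m}. \<beta> i)"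
proof -
  assume j: "1 \<le> j" "j \<le> m+1"
  show ?thesis
  proof (cases "j = m+1")
    case True thus ?thesis by (simp add: Yc_def)
  next
    case False hence "j \<le> m" using j by simp
    thus ?thesis unfolding mkab_def Let_def using j Y_mk by blast
  qed
qed

lemma mkab_A: "1 \<le> k \<Longrightarrow> k \<le> m \<Longrightarrow> Ac m (mkab m \<alpha> \<beta>) k = \<alpha> (m+1-k)"
proof -
  assume k: "1 \<le> k" "k \<le> m"
  have "m + 1 - k = Suc (m - k)" using k by simp
  hence "(\<Sum>i\<in>{1..m+1-k}. \<alpha> i) = (\<Sum>i\<in>{1..m-k}. \<alpha> i) + \<alpha> (m+1-k)" by simp
  moreover have "m + 1 - (k+1) = m - k" by simp
  ultimately show ?thesis using k by (simp add: Ac_def mkab_X)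
qed

lemma mkab_B: "1 \<le> k \<Longrightarrow> k \<le> m \<Longrightarrow> Bc m (mkab m \<alpha> \<beta>) k = \<beta> k"
proof -
  assume k: "1 \<le> k" "k \<le> m"
  have "(\<Sum>i\<in>{k..m}. \<beta> i) = \<beta> k + (\<Sum>i\<in>{Suc k..m}. \<beta> i)" using k by (simp add: sum.atLeast_Suc_atMost)
  thus ?thesis using k by (simp add: Bc_def mkab_Y)
qed

lemma mkab_eql: "eql m (mkab m \<alpha> \<beta>) = 0"
proof -
  have 1: "(\<Sum>i\<in>{1..m}. Xc m (mkab m \<alpha> \<beta>) i) = (\<Sum>j\<in>{1..m}. \<Sum>i\<in>{1..m+1-j}. \<alpha> i)"
    by (rule sum.cong) (auto simp: mkab_X)
  have 2: "(\<Sum>i\<in>{1..m}. Yc m (mkab m \<alpha> \<beta>) i) = (\<Sum>j\<in>{1..m}. \<Sum>i\<in>{j..m}. \<beta> i)"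
    by (rule sum.cong) (auto simp: mkab_Y)
  have 3: "Zc m (mkab m \<alpha> \<beta>) = ((\<Sum>j\<in>{1..m}. \<Sum>i\<in>{j..m}. \<beta> i) - (\<Sum>j\<in>{1..m}. \<Sum>i\<in>{1..m+1-j}. \<alpha> i)) / (real m + 1)"
    unfolding mkab_def Let_def Z_mk ..
  have "real m + 1 \<noteq> 0" by simp
  thus ?thesis unfolding eql_def 1 2 3 by (simp add: field_simps)
qed

lemma mkab_zero: "i \<ge> 2*m+1 \<Longrightarrow> mkab m \<alpha> \<beta> i = 0"
  unfolding mkab_def Let_def mk_def by auto

lemma mkab_Cf:
  assumes \<psi>0: "\<psi> 0 = 0" and \<psi>N: "\<psi> (m+1) = 0"
    and \<psi>D: "\<And>j. 1 \<le> j \<Longrightarrow> j \<le> m \<Longrightarrow> \<psi> (j+1) - 2 * \<psi> j + \<psi> (j-1) = \<alpha> j + \<beta> j"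
  shows "\<forall>j\<le>m+1. Cf m (mkab m \<alpha> \<beta>) j = \<psi> j"
proof (rule harm_eq[of "{0, m+1}"])
  show "\<forall>j\<in>{0, m + 1}. j \<le> m + 1 \<longrightarrow> Cf m (mkab m \<alpha> \<beta>) j = \<psi> j"
    using \<psi>0 \<psi>N Cf_top[of m "mkab m \<alpha> \<beta>"] mkab_eql by (auto simp: Cf_0)
  show "\<forall>j. 0 < j \<longrightarrow> j < m + 1 \<longrightarrow> j \<notin> {0, m + 1} \<longrightarrow>
      Cf m (mkab m \<alpha> \<beta>) (j + 1) - 2 * Cf m (mkab m \<alpha> \<beta>) j + Cf m (mkab m \<alpha> \<beta>) (j - 1) =
      \<psi> (j + 1) - 2 * \<psi> j + \<psi> (j - 1)"
  proof (intro allI impI)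
    fix j assume j: "0 < j" "j < m+1"
    have e: "m + 1 - (m + 1 - j) = j" using j by simp
    have "Cf m (mkab m \<alpha> \<beta>) (j + 1) - 2 * Cf m (mkab m \<alpha> \<beta>) j + Cf m (mkab m \<alpha> \<beta>) (j - 1)
       = Ac m (mkab m \<alpha> \<beta>) (m+1-j) + Bc m (mkab m \<alpha> \<beta>) j" by (rule KI) (use j in auto)
    also have "\<dots> = \<alpha> j + \<beta> j" using j e by (simp add: mkab_A mkab_B)
    also have "\<dots> = \<psi> (j + 1) - 2 * \<psi> j + \<psi> (j - 1)" using \<psi>D[of j] j by simp
    finally show "Cf m (mkab m \<alpha> \<beta>) (j + 1) - 2 * Cf m (mkab m \<alpha> \<beta>) j + Cf m (mkab m \<alpha> \<beta>) (j - 1) =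
      \<psi> (j + 1) - 2 * \<psi> j + \<psi> (j - 1)" .
  qed
qed auto

end



definition rigid :: "nat \<Rightarrow> nat \<Rightarrow> (nat \<Rightarrow> real) \<Rightarrow> bool" where
  "rigid d m p = (\<forall>q. (\<forall>c\<in>ineqs d. lval d c p = 0 \<longrightarrow> lin d (fst c) q = 0) \<longrightarrow> eql m q = 0
      \<longrightarrow> (\<forall>i<2*m+1. q i = 0))"

lemma sum_nonneg_zero:
  fixes g :: "nat \<Rightarrow> real"
  assumes "(\<Sum>k\<in>A. g k) = 0" "finite A" "\<And>k. k \<in> A \<Longrightarrow> g k \<ge> 0" "k \<in> A"
  shows "g k = 0"
  using assms sum_nonneg_eq_0_iff by blast

lemma DIR:
  fixes \<alpha> \<beta> \<psi> :: "nat \<Rightarrow> real"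
  assumes d: "d = m+2" and m: "m \<ge> 1" and p: "p \<in> Pd d" and rig: "rigid d m p"
    and \<psi>0: "\<psi> 0 = 0" and \<psi>N: "\<psi> (m+1) = 0"
    and \<psi>D: "\<And>j. 1 \<le> j \<Longrightarrow> j \<le> m \<Longrightarrow> \<psi> (j+1) - 2 * \<psi> j + \<psi> (j-1) = \<alpha> j + \<beta> j"
    and hA: "\<And>i. 1 \<le> i \<Longrightarrow> i \<le> m \<Longrightarrow> Ac m p (m+1-i) = 0 \<Longrightarrow> \<alpha> i = 0"
    and hB: "\<And>i. 1 \<le> i \<Longrightarrow> i \<le> m \<Longrightarrow> Bc m p i = 0 \<Longrightarrow> \<beta> i = 0"
    and hC: "\<And>j. 1 \<le> j \<Longrightarrow> j \<le> m \<Longrightarrow> Cf m p j + real j * (real m + 1 - real j) = 0 \<Longrightarrow> \<psi> j = 0"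
    and i: "1 \<le> i" "i \<le> m"
  shows "\<alpha> i = 0 \<and> \<beta> i = 0"
proof -
  note F = Pd_facts[OF d m p]
  define q where "q = mkab m \<alpha> \<beta>"
  have Cq: "\<forall>j\<le>m+1. Cf m q j = \<psi> j" unfolding q_def by (rule mkab_Cf[OF m \<psi>0 \<psi>N \<psi>D])
  have Xz: "\<And>j. 1 \<le> j \<Longrightarrow> j \<le> m \<Longrightarrow> Xc m p j = 0 \<Longrightarrow> Xc m q j = 0"
  proof -
    fix j assume j: "1 \<le> j" "j \<le> m" "Xc m p j = 0"
    have s: "(\<Sum>k\<in>{j..m}. Ac m p k) = 0" using X_tele[of j m p] j by simp
    have "Xc m q j = (\<Sum>i\<in>{1..m+1-j}. \<alpha> i)" unfolding q_def using mkab_X[OF m] j by simp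
    also have "\<dots> = 0"
    proof (rule sum.neutral, intro ballI)
      fix i assume ii: "i \<in> {1..m+1-j}"
      have "Ac m p (m+1-i) = 0"
        by (rule sum_nonneg_zero[OF s]) (use ii j F(2) in auto)
      thus "\<alpha> i = 0" using hA ii j by auto
    qed
    finally show "Xc m q j = 0" .
  qed
  have Yz: "\<And>j. 1 \<le> j \<Longrightarrow> j \<le> m \<Longrightarrow> Yc m p j = 0 \<Longrightarrow> Yc m q j = 0"
  proof -
    fix j assume j: "1 \<le> j" "j \<le> m" "Yc m p j = 0"
    have s: "(\<Sum>k\<in>{j..m}. Bc m p k) = 0" using Y_tele[of j m p] j by simp
    have "Yc m q j = (\<Sum>i\<in>{j..m}. \<beta> i)" unfolding q_def using mkab_Y[OF m] j by simp
    also have "\<dots> = 0"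
    proof (rule sum.neutral, intro ballI)
      fix i assume ii: "i \<in> {j..m}"
      have "Bc m p i = 0"
        by (rule sum_nonneg_zero[OF s]) (use ii j F(3) in auto)
      thus "\<beta> i = 0" using hB ii j by auto
    qed
    finally show "Yc m q j = 0" .
  qed
  have tight: "\<forall>c\<in>ineqs d. lval d c p = 0 \<longrightarrow> lin d (fst c) q = 0"
  proof (intro ballI impI)
    fix c assume c: "c \<in> ineqs d" and t: "lval d c p = 0"
    note cs = ineqs_cases[OF d c]
    show "lin d (fst c) q = 0"
    proof -
      { fix j assume j: "1\<le>j" "j<m" "snd c = 0" "\<forall>q. lin d (fst c) q = Ac m q j"
        have "Ac m p (m+1-(m+1-j)) = 0" using t j by (simp add: lval_lin)
        hence "\<alpha> (m+1-j) = 0" using hA[of "m+1-j"] j by simp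
        hence ?thesis using j mkab_A[OF m, of j \<alpha> \<beta>] unfolding q_def by simp }
      moreover
      { fix j assume j: "1\<le>j" "j<m" "snd c = 0" "\<forall>q. lin d (fst c) q = Bc m q j"
        have "Bc m p j = 0" using t j by (simp add: lval_lin)
        hence "\<beta> j = 0" using hB[of j] j by simp
        hence ?thesis using j mkab_B[OF m, of j \<alpha> \<beta>] unfolding q_def by simp }
      moreover
      { fix j assume j: "1\<le>j" "j\<le>m" "snd c = 0" "\<forall>q. lin d (fst c) q = Xc m q j"
        hence ?thesis using t Xz[of j] by (simp add: lval_lin) }
      moreover
      { fix j assume j: "1\<le>j" "j\<le>m" "snd c = 0" "\<forall>q. lin d (fst c) q = Yc m q j"
        hence ?thesis using t Yz[of j] by (simp add: lval_lin) }
      moreover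
      { fix j assume j: "1\<le>j" "j\<le>m" "snd c = real j * (real m + 1 - real j)" "\<forall>q. lin d (fst c) q = Cf m q j"
        have "\<psi> j = 0" using t j hC[of j] by (simp add: lval_lin)
        hence ?thesis using j Cq by simp }
      ultimately show ?thesis using cs by blast
    qed
  qed
  have E: "eql m q = 0" unfolding q_def by (rule mkab_eql[OF m])
  have qz: "\<forall>i<2*m+1. q i = 0" using rig tight E unfolding rigid_def by blast
  have Xq: "\<And>j. Xc m q j = 0" unfolding Xc_def by (auto intro!: qz[rule_format])
  have Yq: "\<And>j. Yc m q j = 0" unfolding Yc_def by (auto intro!: qz[rule_format])
  have "\<alpha> (m+1-(m+1-i)) = Ac m q (m+1-i)" unfolding q_def by (rule mkab_A[OF m, symmetric]) (use i in auto)
  hence a: "\<alpha> i = 0" using i Xq by (simp add: Ac_def)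
  have "\<beta> i = Bc m q i" unfolding q_def by (rule mkab_B[OF m, symmetric]) (use i in auto)
  hence b: "\<beta> i = 0" using Yq by (simp add: Bc_def)
  show ?thesis using a b by simp
qed



definition phi :: "nat \<Rightarrow> (nat \<Rightarrow> real) \<Rightarrow> nat \<Rightarrow> real" where
  "phi m p j = Cf m p j + real j * (real m + 1 - real j)"
definition cp :: "nat \<Rightarrow> (nat \<Rightarrow> real) \<Rightarrow> nat \<Rightarrow> real" where
  "cp m p k = Ac m p (m+1-k) + Bc m p k"

lemma phi_D: assumes "1 \<le> j" "j \<le> m"
  shows "phi m p (j+1) - 2 * phi m p j + phi m p (j-1) = cp m p j - 2"
proof -
  have k: "Cf m p (j+1) - 2 * Cf m p j + Cf m p (j-1) = Ac m p (m+1-j) + Bc m p j" by (rule KI[OF assms])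
  have r: "real (j-1) = real j - 1" using assms by (simp add: of_nat_diff)
  show ?thesis using k unfolding phi_def cp_def r by (simp add: algebra_simps)
qed

lemma phi_0: "phi m p 0 = 0" by (simp add: phi_def Cf_0)
lemma phi_top: "phi m p (m+1) = - eql m p" using Cf_top[of m p] by (simp add: phi_def)

lemma tent_D:
  fixes l k r j :: nat
  assumes lk: "l < k" and kr: "k < r" and j: "1 \<le> j"
  defines "\<psi> \<equiv> \<lambda>j. if l < j \<and> j \<le> k then (real j - real l) * (real r - real k)
      else if k < j \<and> j < r then (real r - real j) * (real k - real l) else 0"
  shows "\<psi> (j+1) - 2 * \<psi> j + \<psi> (j-1) =
    (if j = l then real r - real k else if j = k then - (real r - real l) else if j = r then real k - real l else 0)"
proof -
  have r1: "real (j-1) = real j - 1" using j by (simp add: of_nat_diff)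
  have V1: "\<And>t. l \<le> t \<Longrightarrow> t \<le> k \<Longrightarrow> \<psi> t = (real t - real l) * (real r - real k)"
    unfolding \<psi>_def using lk kr by auto
  have V2: "\<And>t. k \<le> t \<Longrightarrow> t \<le> r \<Longrightarrow> \<psi> t = (real r - real t) * (real k - real l)"
    unfolding \<psi>_def using lk kr by (auto simp: algebra_simps)
  have V3: "\<And>t. t \<le> l \<or> r \<le> t \<Longrightarrow> \<psi> t = 0"
    unfolding \<psi>_def using lk kr by auto
  consider "j < l" | "j = l" | "l < j \<and> j < k" | "j = k" | "k < j \<and> j < r" | "j = r" | "r < j"
    by linarith
  thus ?thesis
  proof cases
    case 1
    have "j - 1 \<le> l" "j \<le> l" "j + 1 \<le> l" "j \<noteq> l" "j \<noteq> k" "j \<noteq> r" using 1 lk kr by auto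
    thus ?thesis using V3 by simp
  next
    case 2
    have a: "j - 1 \<le> l" "j \<le> l" "l \<le> j+1" "j+1 \<le> k" using 2 lk by auto
    have e: "\<psi> (j-1) = 0" "\<psi> j = 0" "\<psi> (j+1) = (real (j+1) - real l) * (real r - real k)"
      using V3[OF disjI1[OF a(1)]] V3[OF disjI1[OF a(2)]] V1[OF a(3) a(4)] by auto
    show ?thesis unfolding e using 2 by simp
  next
    case 3
    have a: "l \<le> j-1" "j-1 \<le> k" "l \<le> j" "j \<le> k" "l \<le> j+1" "j+1 \<le> k" "j \<noteq> l" "j \<noteq> k" "j \<noteq> r"
      using 3 kr by auto
    have e: "\<psi> (j-1) = (real (j-1) - real l) * (real r - real k)" "\<psi> j = (real j - real l) * (real r - real k)"
       "\<psi> (j+1) = (real (j+1) - real l) * (real r - real k)"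
      using V1[OF a(1) a(2)] V1[OF a(3) a(4)] V1[OF a(5) a(6)] by auto
    show ?thesis unfolding e r1 using a by (simp add: algebra_simps)
  next
    case 4
    have a: "l \<le> j-1" "j-1 \<le> k" "k \<le> j" "j \<le> r" "k \<le> j+1" "j+1 \<le> r" "j \<noteq> l" "j \<noteq> r"
      using 4 lk kr by auto
    have e: "\<psi> (j-1) = (real (j-1) - real l) * (real r - real k)" "\<psi> j = (real r - real j) * (real k - real l)"
       "\<psi> (j+1) = (real r - real (j+1)) * (real k - real l)"
      using V1[OF a(1) a(2)] V2[OF a(3) a(4)] V2[OF a(5) a(6)] by auto
    show ?thesis unfolding e r1 using a 4 by (simp add: algebra_simps)
  next
    case 5
    have a: "k \<le> j-1" "j-1 \<le> r" "k \<le> j" "j \<le> r" "k \<le> j+1" "j+1 \<le> r" "j \<noteq> l" "j \<noteq> k" "j \<noteq> r"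
      using 5 lk by auto
    have e: "\<psi> (j-1) = (real r - real (j-1)) * (real k - real l)" "\<psi> j = (real r - real j) * (real k - real l)"
       "\<psi> (j+1) = (real r - real (j+1)) * (real k - real l)"
      using V2[OF a(1) a(2)] V2[OF a(3) a(4)] V2[OF a(5) a(6)] by auto
    show ?thesis unfolding e r1 using a by (simp add: algebra_simps)
  next
    case 6
    have a: "k \<le> j-1" "j-1 \<le> r" "r \<le> j" "r \<le> j+1" "j \<noteq> l" "j \<noteq> k"
      using 6 lk kr by auto
    have e: "\<psi> (j-1) = (real r - real (j-1)) * (real k - real l)" "\<psi> j = 0" "\<psi> (j+1) = 0"
      using V2[OF a(1) a(2)] V3[OF disjI2[OF a(3)]] V3[OF disjI2[OF a(4)]] by auto
    show ?thesis unfolding e r1 using a 6 by (simp add: algebra_simps)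
  next
    case 7
    have "r \<le> j - 1" "r \<le> j" "r \<le> j + 1" "j \<noteq> l" "j \<noteq> k" "j \<noteq> r" using 7 lk kr by auto
    thus ?thesis using V3 by simp
  qed
qed

context
  fixes d m :: nat and p :: "nat \<Rightarrow> real"
  assumes d: "d = m+2" and m: "m \<ge> 1" and p: "p \<in> Pd d"
begin

lemma phi_nonneg: "j \<le> m+1 \<Longrightarrow> phi m p j \<ge> 0"
proof -
  assume j: "j \<le> m+1"
  note F = Pd_facts[OF d m p]
  consider "j = 0" | "j = m+1" | "1 \<le> j \<and> j \<le> m" using j by linarith
  thus ?thesis
  proof cases
    case 1 thus ?thesis by (simp add: phi_0)
  next
    case 2 thus ?thesis using F(7) phi_top[of m p] by simp
  next
    case 3 thus ?thesis using F(6)[of j] by (simp add: phi_def)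
  qed
qed

lemma cp_nonneg: "1 \<le> k \<Longrightarrow> k \<le> m \<Longrightarrow> Ac m p (m+1-k) \<ge> 0 \<and> Bc m p k \<ge> 0"
  using Pd_facts(2,3)[OF d m p] by auto

lemma T_sub_S: assumes t: "1 \<le> t" "t \<le> m" "phi m p t = 0" shows "cp m p t > 0"
proof -
  have "phi m p (t+1) \<ge> 0" "phi m p (t-1) \<ge> 0" using phi_nonneg t by auto
  thus ?thesis using phi_D[of t m p] t by simp
qed

lemma no_both: assumes rig: "rigid d m p" and k: "1 \<le> k" "k \<le> m"
  shows "\<not> (Ac m p (m+1-k) > 0 \<and> Bc m p k > 0)"
proof
  assume h: "Ac m p (m+1-k) > 0 \<and> Bc m p k > 0"
  have "(\<lambda>i. if i = k then 1 else 0::real) k = 0 \<and> (\<lambda>i. if i = k then -1 else 0::real) k = 0"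
    by (rule DIR[OF d m p rig, where \<psi>="\<lambda>_. 0"]) (use h k in auto)
  thus False by simp
qed

lemma S_sub_T: assumes rig: "rigid d m p" and k: "1 \<le> k" "k \<le> m" and ck: "cp m p k > 0"
  shows "phi m p k = 0"
proof (rule ccontr)
  assume nk: "phi m p k \<noteq> 0"
  define Z0 where "Z0 = {t. t < k \<and> phi m p t = 0}"
  define Z1 where "Z1 = {t. k < t \<and> t \<le> m+1 \<and> phi m p t = 0}"
  have fZ0: "finite Z0" unfolding Z0_def by (rule finite_subset[of _ "{..<k}"]) auto
  have fZ1: "finite Z1" unfolding Z1_def by (rule finite_subset[of _ "{..m+1}"]) auto
  have 0: "0 \<in> Z0" unfolding Z0_def using k by (simp add: phi_0)
  have 1: "m+1 \<in> Z1" unfolding Z1_def using k Pd_facts(7)[OF d m p] phi_top[of m p] by simp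
  define l where "l = Max Z0"
  define r where "r = Min Z1"
  have lZ: "l \<in> Z0" unfolding l_def using Max_in[OF fZ0] 0 by blast
  have rZ: "r \<in> Z1" unfolding r_def using Min_in[OF fZ1] 1 by blast
  have lmax: "\<And>t. t \<in> Z0 \<Longrightarrow> t \<le> l" unfolding l_def using Max_ge[OF fZ0] by blast
  have rmin: "\<And>t. t \<in> Z1 \<Longrightarrow> r \<le> t" unfolding r_def using Min_le[OF fZ1] by blast
  have lk: "l < k" "phi m p l = 0" using lZ unfolding Z0_def by auto
  have kr: "k < r" "r \<le> m+1" "phi m p r = 0" using rZ unfolding Z1_def by auto
  define \<psi> where "\<psi> = (\<lambda>j. if l < j \<and> j \<le> k then (real j - real l) * (real r - real k)
      else if k < j \<and> j < r then (real r - real j) * (real k - real l) else 0)"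
  define e where "e = (\<lambda>j. if j = l then real r - real k else if j = k then - (real r - real l)
      else if j = r then real k - real l else 0)"
  define \<alpha> where "\<alpha> = (\<lambda>j. if Ac m p (m+1-j) > 0 then e j else 0)"
  define \<beta> where "\<beta> = (\<lambda>j. if Ac m p (m+1-j) > 0 then 0 else e j)"
  have "\<alpha> k = 0 \<and> \<beta> k = 0"
  proof (rule DIR[OF d m p rig, where \<psi>=\<psi>])
    show "\<psi> 0 = 0" unfolding \<psi>_def by simp
    show "\<psi> (m+1) = 0" unfolding \<psi>_def using k kr by auto
    show "\<And>j. 1 \<le> j \<Longrightarrow> j \<le> m \<Longrightarrow> \<psi> (j+1) - 2 * \<psi> j + \<psi> (j-1) = \<alpha> j + \<beta> j"
    proof -
      fix j assume j: "1 \<le> j" "j \<le> m"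
      have "\<psi> (j+1) - 2 * \<psi> j + \<psi> (j-1) = e j"
        unfolding \<psi>_def e_def by (rule tent_D[OF lk(1) kr(1) j(1)])
      thus "\<psi> (j+1) - 2 * \<psi> j + \<psi> (j-1) = \<alpha> j + \<beta> j" unfolding \<alpha>_def \<beta>_def by simp
    qed
    show "\<And>i. 1 \<le> i \<Longrightarrow> i \<le> m \<Longrightarrow> Ac m p (m+1-i) = 0 \<Longrightarrow> \<alpha> i = 0"
      unfolding \<alpha>_def by simp
    show "\<And>i. 1 \<le> i \<Longrightarrow> i \<le> m \<Longrightarrow> Bc m p i = 0 \<Longrightarrow> \<beta> i = 0"
    proof -
      fix i assume i: "1 \<le> i" "i \<le> m" "Bc m p i = 0"
      show "\<beta> i = 0"
      proof (cases "Ac m p (m+1-i) > 0")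
        case True thus ?thesis unfolding \<beta>_def by simp
      next
        case False
        hence c0: "cp m p i = 0" using cp_nonneg[OF i(1,2)] i(3) unfolding cp_def by simp
        have "i \<noteq> l" using T_sub_S[OF i(1,2)] lk(2) c0 by auto
        moreover have "i \<noteq> k" using ck c0 by auto
        moreover have "i \<noteq> r" using T_sub_S[OF i(1,2)] kr(3) c0 by auto
        ultimately show ?thesis unfolding \<beta>_def e_def using False by simp
      qed
    qed
    show "\<And>j. 1 \<le> j \<Longrightarrow> j \<le> m \<Longrightarrow> Cf m p j + real j * (real m + 1 - real j) = 0 \<Longrightarrow> \<psi> j = 0"
    proof -
      fix j assume j: "1 \<le> j" "j \<le> m" "Cf m p j + real j * (real m + 1 - real j) = 0"
      hence pj: "phi m p j = 0" by (simp add: phi_def)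
      have "\<not> (l < j \<and> j < k)" using lmax[of j] pj unfolding Z0_def by auto
      moreover have "j \<noteq> k" using pj nk by auto
      moreover have "\<not> (k < j \<and> j < r)" using rmin[of j] pj j unfolding Z1_def by auto
      ultimately show "\<psi> j = 0" unfolding \<psi>_def by auto
    qed
  qed (use k in auto)
  moreover have "\<alpha> k + \<beta> k = e k" unfolding \<alpha>_def \<beta>_def by simp
  moreover have "e k = - (real r - real l)" unfolding e_def using lk kr by simp
  ultimately show False using lk kr by simp
qed

end



definition FF :: "nat \<Rightarrow> (nat \<Rightarrow> nat) set" where
  "FF m = PiE {1..m} (\<lambda>_. {0,1,2})"
definition Sf :: "nat \<Rightarrow> (nat \<Rightarrow> nat) \<Rightarrow> nat set" where
  "Sf m f = {k\<in>{1..m}. f k \<noteq> 0}"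
definition ap :: "nat \<Rightarrow> (nat \<Rightarrow> nat) \<Rightarrow> nat \<Rightarrow> real" where
  "ap m f k = (if f k = 1 then cc m (Sf m f) k else 0)"
definition bp :: "nat \<Rightarrow> (nat \<Rightarrow> nat) \<Rightarrow> nat \<Rightarrow> real" where
  "bp m f k = (if f k = 2 then cc m (Sf m f) k else 0)"
definition pf :: "nat \<Rightarrow> (nat \<Rightarrow> nat) \<Rightarrow> nat \<Rightarrow> real" where
  "pf m f = mkab m (ap m f) (bp m f)"

lemma Sf_sub: "Sf m f \<subseteq> {1..m}" by (auto simp: Sf_def)

lemma FF_vals: "f \<in> FF m \<Longrightarrow> k \<in> {1..m} \<Longrightarrow> f k = 0 \<or> f k = 1 \<or> f k = 2"
  unfolding FF_def by (auto simp: PiE_iff)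

lemma ap_nonneg: "k \<in> {1..m} \<Longrightarrow> ap m f k \<ge> 0"
proof -
  assume k: "k \<in> {1..m}"
  show ?thesis
  proof (cases "f k = 1")
    case True
    hence "k \<in> Sf m f" using k unfolding Sf_def by simp
    thus ?thesis using cc_pos[OF Sf_sub, of k m f] True unfolding ap_def by simp
  qed (simp add: ap_def)
qed

lemma bp_nonneg: "k \<in> {1..m} \<Longrightarrow> bp m f k \<ge> 0"
proof -
  assume k: "k \<in> {1..m}"
  show ?thesis
  proof (cases "f k = 2")
    case True
    hence "k \<in> Sf m f" using k unfolding Sf_def by simp
    thus ?thesis using cc_pos[OF Sf_sub, of k m f] True unfolding bp_def by simp
  qed (simp add: bp_def)
qed

lemma coords_eq:
  assumes m: "m \<ge> 1"
    and z1: "\<forall>i\<ge>2*m+1. p i = 0" and z2: "\<forall>i\<ge>2*m+1. p' i = 0"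
    and e1: "eql m p = 0" and e2: "eql m p' = 0"
    and A: "\<And>k. 1 \<le> k \<Longrightarrow> k \<le> m \<Longrightarrow> Ac m p k = Ac m p' k"
    and B: "\<And>k. 1 \<le> k \<Longrightarrow> k \<le> m \<Longrightarrow> Bc m p k = Bc m p' k"
  shows "p = p'"
proof -
  have X: "\<And>j. 1 \<le> j \<Longrightarrow> j \<le> m \<Longrightarrow> Xc m p j = Xc m p' j"
  proof -
    fix j assume j: "1 \<le> j" "j \<le> m"
    have "Xc m p j = (\<Sum>k\<in>{j..m}. Ac m p k)" using X_tele j by simp
    also have "\<dots> = (\<Sum>k\<in>{j..m}. Ac m p' k)" by (rule sum.cong) (use j A in auto)
    also have "\<dots> = Xc m p' j" using X_tele j by simp
    finally show "Xc m p j = Xc m p' j" .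
  qed
  have Y: "\<And>j. 1 \<le> j \<Longrightarrow> j \<le> m \<Longrightarrow> Yc m p j = Yc m p' j"
  proof -
    fix j assume j: "1 \<le> j" "j \<le> m"
    have "Yc m p j = (\<Sum>k\<in>{j..m}. Bc m p k)" using Y_tele j by simp
    also have "\<dots> = (\<Sum>k\<in>{j..m}. Bc m p' k)" by (rule sum.cong) (use j B in auto)
    also have "\<dots> = Yc m p' j" using Y_tele j by simp
    finally show "Yc m p j = Yc m p' j" .
  qed
  have sX: "(\<Sum>i\<in>{1..m}. Xc m p i) = (\<Sum>i\<in>{1..m}. Xc m p' i)" by (rule sum.cong) (use X in auto)
  have sY: "(\<Sum>i\<in>{1..m}. Yc m p i) = (\<Sum>i\<in>{1..m}. Yc m p' i)" by (rule sum.cong) (use Y in auto)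
  have "(real m + 1) * Zc m p = (real m + 1) * Zc m p'" using e1 e2 sX sY unfolding eql_def by simp
  hence Z: "Zc m p = Zc m p'" by simp
  show ?thesis
  proof
    fix i show "p i = p' i"
    proof (cases "i < 2*m+1")
      case True
      show ?thesis
        unfolding q_coords[OF True m, of p] q_coords[OF True m, of p'] using X Y Z True by auto
    next
      case False thus ?thesis using z1 z2 by simp
    qed
  qed
qed

context
  fixes m :: nat and f :: "nat \<Rightarrow> nat"
  assumes m: "m \<ge> 1" and f: "f \<in> FF m"
begin

lemma apbp: "k \<in> {1..m} \<Longrightarrow> ap m f k + bp m f k = (if k \<in> Sf m f then cc m (Sf m f) k else 0)"
  using FF_vals[OF f, of k] unfolding ap_def bp_def Sf_def by auto

lemma pf_A: "1 \<le> k \<Longrightarrow> k \<le> m \<Longrightarrow> Ac m (pf m f) k = ap m f (m+1-k)"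
  unfolding pf_def by (rule mkab_A[OF m])
lemma pf_B: "1 \<le> k \<Longrightarrow> k \<le> m \<Longrightarrow> Bc m (pf m f) k = bp m f k"
  unfolding pf_def by (rule mkab_B[OF m])

lemma cp_pf: "1 \<le> k \<Longrightarrow> k \<le> m \<Longrightarrow> cp m (pf m f) k = (if k \<in> Sf m f then cc m (Sf m f) k else 0)"
proof -
  assume k: "1 \<le> k" "k \<le> m"
  have "m + 1 - (m + 1 - k) = k" using k by simp
  thus ?thesis unfolding cp_def using k pf_A[of "m+1-k"] pf_B[of k] apbp[of k] by simp
qed

lemma phi_pf: "\<forall>j\<le>m+1. phi m (pf m f) j = psi m (Sf m f) j"
proof (rule harm_eq[of "{0, m+1}"])
  show "\<forall>j\<in>{0, m + 1}. j \<le> m + 1 \<longrightarrow> phi m (pf m f) j = psi m (Sf m f) j"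
    using phi_0 phi_top[of m "pf m f"] mkab_eql[OF m] psi_zero[OF Sf_sub] unfolding pf_def by auto
  show "\<forall>j. 0 < j \<longrightarrow> j < m + 1 \<longrightarrow> j \<notin> {0, m + 1} \<longrightarrow>
      phi m (pf m f) (j + 1) - 2 * phi m (pf m f) j + phi m (pf m f) (j - 1) =
      psi m (Sf m f) (j + 1) - 2 * psi m (Sf m f) j + psi m (Sf m f) (j - 1)"
  proof (intro allI impI)
    fix j assume j: "0 < j" "j < m+1"
    hence j': "1 \<le> j" "j \<le> m" by auto
    show "phi m (pf m f) (j + 1) - 2 * phi m (pf m f) j + phi m (pf m f) (j - 1) =
      psi m (Sf m f) (j + 1) - 2 * psi m (Sf m f) j + psi m (Sf m f) (j - 1)"
      unfolding phi_D[OF j'] psi_Delta[OF Sf_sub j'] cp_pf[OF j'] by simp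
  qed
qed auto

lemma pf_zero: "\<forall>i\<ge>2*m+1. pf m f i = 0" unfolding pf_def using mkab_zero[OF m] by blast

lemma pf_Pd: assumes d: "d = m+2" shows "pf m f \<in> Pd d"
proof (rule Pd_intro[OF d m pf_zero])
  show "\<And>k. 1 \<le> k \<Longrightarrow> k \<le> m \<Longrightarrow> 0 \<le> Ac m (pf m f) k"
  proof -
    fix k assume k: "1 \<le> k" "k \<le> m"
    have "m+1-k \<in> {1..m}" using k by auto
    thus "0 \<le> Ac m (pf m f) k" using pf_A[OF k] ap_nonneg by simp
  qed
  show "\<And>k. 1 \<le> k \<Longrightarrow> k \<le> m \<Longrightarrow> 0 \<le> Bc m (pf m f) k"
    using pf_B bp_nonneg by simp
  show "\<And>k. 1 \<le> k \<Longrightarrow> k \<le> m \<Longrightarrow> 0 \<le> Xc m (pf m f) k"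
  proof -
    fix k assume k: "1 \<le> k" "k \<le> m"
    have h: "\<And>i. i \<in> {1..m+1-k} \<Longrightarrow> ap m f i \<ge> 0" using ap_nonneg k by auto
    have "Xc m (pf m f) k = (\<Sum>i\<in>{1..m+1-k}. ap m f i)" unfolding pf_def using mkab_X[OF m] k by simp
    thus "0 \<le> Xc m (pf m f) k" using sum_nonneg[of "{1..m+1-k}" "ap m f", OF h] by simp
  qed
  show "\<And>k. 1 \<le> k \<Longrightarrow> k \<le> m \<Longrightarrow> 0 \<le> Yc m (pf m f) k"
  proof -
    fix k assume k: "1 \<le> k" "k \<le> m"
    have h: "\<And>i. i \<in> {k..m} \<Longrightarrow> bp m f i \<ge> 0" using bp_nonneg k by auto
    have "Yc m (pf m f) k = (\<Sum>i\<in>{k..m}. bp m f i)" unfolding pf_def using mkab_Y[OF m] k by simp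
    thus "0 \<le> Yc m (pf m f) k" using sum_nonneg[of "{k..m}" "bp m f", OF h] by simp
  qed
  show "\<And>j. 1 \<le> j \<Longrightarrow> j \<le> m \<Longrightarrow> 0 \<le> Cf m (pf m f) j + real j * (real m + 1 - real j)"
    using phi_pf psi_nonneg[OF Sf_sub] unfolding phi_def by simp
  show "eql m (pf m f) = 0" unfolding pf_def by (rule mkab_eql[OF m])
qed

lemma pf_int: "pf m f i \<in> \<int>"
proof -
  have api: "\<And>k. ap m f k \<in> \<int>" unfolding ap_def using cc_int[OF Sf_sub] by auto
  have bpi: "\<And>k. bp m f k \<in> \<int>" unfolding bp_def using cc_int[OF Sf_sub] by auto
  have Xi: "\<And>j. 1 \<le> j \<Longrightarrow> j \<le> m \<Longrightarrow> Xc m (pf m f) j \<in> \<int>"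
    unfolding pf_def using mkab_X[OF m] api by (simp add: Ints_sum)
  have Yi: "\<And>j. 1 \<le> j \<Longrightarrow> j \<le> m \<Longrightarrow> Yc m (pf m f) j \<in> \<int>"
    unfolding pf_def using mkab_Y[OF m] bpi by (simp add: Ints_sum)
  have "phi m (pf m f) 1 = psi m (Sf m f) 1" using phi_pf by simp
  hence "Zc m (pf m f) = psi m (Sf m f) 1 - real m + Yc m (pf m f) 1"
    using Cf_1[of m "pf m f"] unfolding phi_def by simp
  hence Zi: "Zc m (pf m f) \<in> \<int>" using psi_int[OF Sf_sub] Yi[of 1] m by simp
  show ?thesis
  proof (cases "i < 2*m+1")
    case True
    show ?thesis unfolding q_coords[OF True m] using Xi Yi Zi True by auto
  next
    case False thus ?thesis using pf_zero by simp
  qed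
qed

end

lemma vert_form:
  assumes d: "d = m+2" and m: "m \<ge> 1" and p: "p \<in> Pd d" and rig: "rigid d m p"
  shows "\<exists>f\<in>FF m. p = pf m f"
proof -
  note F = Pd_facts[OF d m p]
  define f :: "nat \<Rightarrow> nat" where "f = (\<lambda>k. if k \<in> {1..m} then (if Ac m p (m+1-k) > 0 then 1 else if Bc m p k > 0 then 2 else 0) else undefined)"
  have fF: "f \<in> FF m" unfolding FF_def f_def by (auto simp: PiE_iff extensional_def)
  define S where "S = Sf m f"
  have Sc: "\<And>k. k \<in> {1..m} \<Longrightarrow> k \<in> S \<longleftrightarrow> cp m p k > 0"
  proof -
    fix k assume k: "k \<in> {1..m}"
    have "Ac m p (m+1-k) \<ge> 0" "Bc m p k \<ge> 0" using cp_nonneg[OF d m p, of k] k by auto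
    thus "k \<in> S \<longleftrightarrow> cp m p k > 0" unfolding S_def Sf_def f_def cp_def using k by auto
  qed
  have SS: "S \<subseteq> {1..m}" unfolding S_def by (rule Sf_sub)
  have ph: "\<forall>j\<le>m+1. phi m p j = psi m S j"
  proof (rule harm_eq[of "insert 0 (insert (m+1) S)"])
    show "\<forall>j\<in>insert 0 (insert (m + 1) S). j \<le> m + 1 \<longrightarrow> phi m p j = psi m S j"
    proof (intro ballI impI)
      fix j assume j: "j \<in> insert 0 (insert (m + 1) S)" "j \<le> m+1"
      have "psi m S j = 0" by (rule psi_zero[OF SS j(1)])
      moreover have "phi m p j = 0"
      proof -
        consider "j = 0" | "j = m+1" | "j \<in> S" using j by auto
        thus ?thesis
        proof cases
          case 1 thus ?thesis by (simp add: phi_0)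
        next
          case 2 thus ?thesis using F(7) phi_top[of m p] by simp
        next
          case 3 thus ?thesis using S_sub_T[OF d m p rig] Sc[of j] SS by auto
        qed
      qed
      ultimately show "phi m p j = psi m S j" by simp
    qed
    show "\<forall>j. 0 < j \<longrightarrow> j < m + 1 \<longrightarrow> j \<notin> insert 0 (insert (m + 1) S) \<longrightarrow>
      phi m p (j + 1) - 2 * phi m p j + phi m p (j - 1) = psi m S (j + 1) - 2 * psi m S j + psi m S (j - 1)"
    proof (intro allI impI)
      fix j assume j: "0 < j" "j < m+1" "j \<notin> insert 0 (insert (m + 1) S)"
      hence j': "1 \<le> j" "j \<le> m" by auto
      have "cp m p j = 0" using Sc[of j] j j' cp_nonneg[OF d m p j'] unfolding cp_def by auto
      thus "phi m p (j + 1) - 2 * phi m p j + phi m p (j - 1) = psi m S (j + 1) - 2 * psi m S j + psi m S (j - 1)"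
        unfolding phi_D[OF j'] psi_Delta[OF SS j'] using j by simp
    qed
  qed auto
  have ccS: "\<And>k. k \<in> S \<Longrightarrow> cp m p k = cc m S k"
  proof -
    fix k assume k: "k \<in> S"
    hence k': "1 \<le> k" "k \<le> m" using SS by auto
    have "cp m p k - 2 = phi m p (k+1) - 2 * phi m p k + phi m p (k-1)" using phi_D[OF k'] by simp
    also have "\<dots> = psi m S (k+1) - 2 * psi m S k + psi m S (k-1)" using ph k' by simp
    also have "\<dots> = cc m S k - 2" using psi_Delta[OF SS k'] k by simp
    finally show "cp m p k = cc m S k" by simp
  qed
  have Aeq: "\<And>k. 1 \<le> k \<Longrightarrow> k \<le> m \<Longrightarrow> Ac m p (m+1-k) = ap m f k \<and> Bc m p k = bp m f k"
  proof -
    fix k assume k: "1 \<le> k" "k \<le> m"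
    have nn: "Ac m p (m+1-k) \<ge> 0" "Bc m p k \<ge> 0" using cp_nonneg[OF d m p k] by auto
    have nb: "\<not> (Ac m p (m+1-k) > 0 \<and> Bc m p k > 0)" by (rule no_both[OF d m p rig k])
    show "Ac m p (m+1-k) = ap m f k \<and> Bc m p k = bp m f k"
    proof (cases "Ac m p (m+1-k) > 0")
      case True
      hence "f k = 1" "k \<in> S" "Bc m p k = 0" using k nn nb Sc[of k] unfolding f_def cp_def by auto
      moreover have "cp m p k = cc m S k" using ccS \<open>k \<in> S\<close> by simp
      ultimately show ?thesis unfolding ap_def bp_def cp_def S_def by simp
    next
      case False
      hence A0: "Ac m p (m+1-k) = 0" using nn by simp
      show ?thesis
      proof (cases "Bc m p k > 0")
        case True
        hence "f k = 2" "k \<in> S" using k A0 Sc[of k] unfolding f_def cp_def by auto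
        moreover have "cp m p k = cc m S k" using ccS \<open>k \<in> S\<close> by simp
        ultimately show ?thesis using A0 unfolding ap_def bp_def cp_def S_def by simp
      next
        case False
        hence "f k = 0" "Bc m p k = 0" using k A0 nn unfolding f_def by auto
        thus ?thesis using A0 unfolding ap_def bp_def by simp
      qed
    qed
  qed
  have "p = pf m f"
  proof (rule coords_eq[OF m F(1) pf_zero[OF m fF] F(7)])
    show "eql m (pf m f) = 0" unfolding pf_def by (rule mkab_eql[OF m])
    show "\<And>k. 1 \<le> k \<Longrightarrow> k \<le> m \<Longrightarrow> Ac m p k = Ac m (pf m f) k"
    proof -
      fix k assume k: "1 \<le> k" "k \<le> m"
      have e: "m + 1 - (m + 1 - k) = k" using k by simp
      have "Ac m p k = ap m f (m+1-k)" using Aeq[of "m+1-k"] k e by simp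
      thus "Ac m p k = Ac m (pf m f) k" using pf_A[OF m fF k] by simp
    qed
    show "\<And>k. 1 \<le> k \<Longrightarrow> k \<le> m \<Longrightarrow> Bc m p k = Bc m (pf m f) k"
      using Aeq pf_B[OF m fF] by simp
  qed
  thus ?thesis using fF by blast
qed

lemma pf_inj: assumes m: "m \<ge> 1" shows "inj_on (pf m) (FF m)"
proof (rule inj_onI)
  fix f g assume f: "f \<in> FF m" and g: "g \<in> FF m" and e: "pf m f = pf m g"
  have "\<And>k. k \<in> {1..m} \<Longrightarrow> f k = g k"
  proof -
    fix k assume k: "k \<in> {1..m}"
    have e1: "m + 1 - (m + 1 - k) = k" using k by simp
    have k1: "1 \<le> m+1-k" "m+1-k \<le> m" using k by auto
    have "ap m f k = ap m g k"
      using pf_A[OF m f k1] pf_A[OF m g k1] e e1 by simp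
    moreover have "bp m f k = bp m g k" using pf_B[OF m f, of k] pf_B[OF m g, of k] e k by simp
    moreover have "\<And>h. h \<in> FF m \<Longrightarrow> f k \<noteq> 0 \<Longrightarrow> cc m (Sf m f) k > 0"
      using cc_pos[OF Sf_sub] k unfolding Sf_def by auto
    moreover have "\<And>h. h \<in> FF m \<Longrightarrow> g k \<noteq> 0 \<Longrightarrow> cc m (Sf m g) k > 0"
      using cc_pos[OF Sf_sub] k unfolding Sf_def by auto
    ultimately show "f k = g k" using FF_vals[OF f k] FF_vals[OF g k] f
      unfolding ap_def bp_def by (smt (verit) less_irrefl)
  qed
  thus "f = g" using f g unfolding FF_def by (rule PiE_ext[rotated 2]) (auto simp: PiE_iff)
qed



lemma vert_rigid:
  assumes d: "d = m+2" and v: "p \<in> vertices d"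
  shows "rigid d m p"
proof -
  obtain V where V: "V \<subseteq> fst ` tight d p" "card V = pdim d" "lin_indep (pdim d) V"
    using v unfolding vertices_def by blast
  have fV: "finite V" using V(3) unfolding lin_indep_def by blast
  have K: "\<forall>q. (\<forall>v\<in>V. (\<Sum>i<pdim d. v i * q i) = 0) \<longrightarrow> (\<forall>i<pdim d. q i = 0)"
    using kernel_iff[OF fV V(2)] V(3) by blast
  show ?thesis unfolding rigid_def
  proof (rule allI, intro impI)
    fix q assume H: "\<forall>c\<in>ineqs d. lval d c p = 0 \<longrightarrow> lin d (fst c) q = 0" and E: "eql m q = 0"
    have "\<forall>v\<in>V. (\<Sum>i<pdim d. v i * q i) = 0"
    proof
      fix v assume "v \<in> V"
      then obtain c where c: "c \<in> tight d p" "v = fst c" using V(1) by blast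
      have "lin d (fst c) q = 0"
      proof (cases "c = eqc d")
        case True thus ?thesis using lin_eqc[OF d] E by simp
      next
        case False thus ?thesis using c(1) H unfolding tight_def by auto
      qed
      thus "(\<Sum>i<pdim d. v i * q i) = 0" using c(2) unfolding lin_def by simp
    qed
    thus "\<forall>i<2*m+1. q i = 0" using K d by (simp add: pdim_def)
  qed
qed

lemma card_filter: "finite A \<Longrightarrow> card {i\<in>A. P i} = (\<Sum>i\<in>A. if P i then 1 else 0 :: nat)"
proof -
  assume "finite A"
  have "{i\<in>A. P i} = A \<inter> {i. P i}" by auto
  thus ?thesis using \<open>finite A\<close> by (simp add: sum.If_cases)
qed

definition nAf :: "nat \<Rightarrow> nat \<Rightarrow> nat \<Rightarrow> real" where
  "nAf m j = (if j < m then ev (xi j) - ev (xi (j+1)) else ev (xi j))"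
definition nBf :: "nat \<Rightarrow> nat \<Rightarrow> nat \<Rightarrow> nat \<Rightarrow> real" where
  "nBf d m j = (if j < m then ev (yi d j) - ev (yi d (j+1)) else ev (yi d j))"

context
  fixes d m :: nat
  assumes d: "d = m+2" and m: "m \<ge> 1"
begin

lemma lin_nAf: "1 \<le> j \<Longrightarrow> j \<le> m \<Longrightarrow> lin d (nAf m j) q = Ac m q j"
  unfolding nAf_def using lin_nA[OF d] lin_xi[OF d] by (auto simp: Ac_def Xc_def)
lemma lin_nBf: "1 \<le> j \<Longrightarrow> j \<le> m \<Longrightarrow> lin d (nBf d m j) q = Bc m q j"
  unfolding nBf_def using lin_nB[OF d] lin_yi[OF d] by (auto simp: Bc_def Yc_def)
lemma mem_nAf: "1 \<le> j \<Longrightarrow> j \<le> m \<Longrightarrow> (nAf m j, 0) \<in> ineqs d"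
  unfolding nAf_def using mem_nA[OF d] mem_nX[OF d] by auto
lemma mem_nBf: "1 \<le> j \<Longrightarrow> j \<le> m \<Longrightarrow> (nBf d m j, 0) \<in> ineqs d"
  unfolding nBf_def using mem_nB[OF d] mem_nY[OF d] by auto

lemma nAf_val: "1 \<le> j \<Longrightarrow> j \<le> m \<Longrightarrow> i \<ge> m \<Longrightarrow> nAf m j i = 0"
  unfolding nAf_def ev_def xi_def by auto
lemma nAf_inj: "1 \<le> j \<Longrightarrow> j \<le> m \<Longrightarrow> 1 \<le> j' \<Longrightarrow> j' \<le> m \<Longrightarrow> nAf m j' = nAf m j \<Longrightarrow> j' = j"
proof -
  assume j: "1 \<le> j" "j \<le> m" "1 \<le> j'" "j' \<le> m" and e: "nAf m j' = nAf m j"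
  have "nAf m j (j-1) = 1" using j unfolding nAf_def ev_def xi_def by auto
  hence "nAf m j' (j-1) = 1" using e by simp
  thus "j' = j" using j unfolding nAf_def ev_def xi_def by (auto split: if_splits)
qed
lemma nBf_val: "1 \<le> j \<Longrightarrow> j \<le> m \<Longrightarrow> nBf d m j (2*m) = 0"
  unfolding nBf_def ev_def yi_def using d by auto
lemma nBf_val2: "1 \<le> j \<Longrightarrow> j \<le> m \<Longrightarrow> nBf d m j (m-1+j) = 1"
  unfolding nBf_def ev_def yi_def using d by auto
lemma nBf_inj: "1 \<le> j \<Longrightarrow> j \<le> m \<Longrightarrow> 1 \<le> j' \<Longrightarrow> j' \<le> m \<Longrightarrow> nBf d m j' = nBf d m j \<Longrightarrow> j' = j"
proof -
  assume j: "1 \<le> j" "j \<le> m" "1 \<le> j'" "j' \<le> m" and e: "nBf d m j' = nBf d m j"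
  have "nBf d m j' (m-1+j) = 1" using e nBf_val2 j by simp
  thus "j' = j" using j d unfolding nBf_def ev_def yi_def by (auto split: if_splits)
qed
lemma nC_val: "1 \<le> j \<Longrightarrow> j \<le> m \<Longrightarrow> nC d j (2*m) = real j"
proof -
  assume j: "1 \<le> j" "j \<le> m"
  have 1: "(\<Sum>i\<in>{0..<j-1}. ev (xi (d - 2 - i)) (2*m)) = 0"
    by (rule sum.neutral) (use d j in \<open>auto simp: ev_def xi_def\<close>)
  have 2: "(\<Sum>i\<in>{1..j}. ev (yi d i) (2*m)) = 0"
    by (rule sum.neutral) (use d j in \<open>auto simp: ev_def yi_def\<close>)
  show ?thesis unfolding nC_def using 1 2 d by (simp add: sum_fun_apply ev_def zi_def)
qed
lemma eqc_val: "fst (eqc d) (2*m) = - (real m + 1)"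
proof -
  have 1: "(\<Sum>i\<in>{1..d-2}. ev (xi i) (2*m)) = 0"
    by (rule sum.neutral) (use d in \<open>auto simp: ev_def xi_def\<close>)
  have 2: "(\<Sum>i\<in>{1..d-2}. ev (yi d i) (2*m)) = 0"
    by (rule sum.neutral) (use d in \<open>auto simp: ev_def yi_def\<close>)
  show ?thesis unfolding eqc_def using 1 2 d by (simp add: sum_fun_apply ev_def zi_def)
qed
lemma nAf_val2: "1 \<le> j \<Longrightarrow> j \<le> m \<Longrightarrow> nAf m j (2*m) = 0"
  using nAf_val m by simp
lemma nC_inj: "1 \<le> j \<Longrightarrow> j \<le> m \<Longrightarrow> 1 \<le> j' \<Longrightarrow> j' \<le> m \<Longrightarrow> nC d j' = nC d j \<Longrightarrow> j' = j"
proof -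
  assume j: "1 \<le> j" "j \<le> m" "1 \<le> j'" "j' \<le> m" and e: "nC d j' = nC d j"
  have "real j' = real j" using nC_val[OF j(1,2)] nC_val[OF j(3,4)] e by simp
  thus "j' = j" by simp
qed

lemma pf_vertex: assumes f: "f \<in> FF m" shows "pf m f \<in> vertices d"
proof -
  define p where "p = pf m f"
  define S where "S = Sf m f"
  have SS: "S \<subseteq> {1..m}" unfolding S_def by (rule Sf_sub)
  define KA where "KA = {j\<in>{1..m}. f (m+1-j) \<noteq> 1}"
  define KB where "KB = {j\<in>{1..m}. f j \<noteq> 2}"
  define V where "V = nAf m ` KA \<union> nBf d m ` KB \<union> nC d ` S \<union> {fst (eqc d)}"
  have pP: "p \<in> Pd d" unfolding p_def by (rule pf_Pd[OF m f d])
  have Vsub: "V \<subseteq> fst ` tight d p"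
  proof -
    have "nAf m j \<in> fst ` tight d p" if j: "j \<in> KA" for j
    proof -
      have j': "1 \<le> j" "j \<le> m" using j unfolding KA_def by auto
      have "Ac m p j = ap m f (m+1-j)" unfolding p_def using pf_A[OF m f j'] .
      also have "\<dots> = 0" using j unfolding KA_def ap_def by simp
      finally have "lval d (nAf m j, 0) p = 0" by (simp add: lval_lin lin_nAf[OF j'])
      hence "(nAf m j, 0) \<in> tight d p" using mem_nAf[OF j'] unfolding tight_def by simp
      thus ?thesis by (rule image_eqI[rotated]) simp
    qed
    moreover have "nBf d m j \<in> fst ` tight d p" if j: "j \<in> KB" for j
    proof -
      have j': "1 \<le> j" "j \<le> m" using j unfolding KB_def by auto
      have "Bc m p j = bp m f j" unfolding p_def using pf_B[OF m f j'] .
      also have "\<dots> = 0" using j unfolding KB_def bp_def by simp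
      finally have "lval d (nBf d m j, 0) p = 0" by (simp add: lval_lin lin_nBf[OF j'])
      hence "(nBf d m j, 0) \<in> tight d p" using mem_nBf[OF j'] unfolding tight_def by simp
      thus ?thesis by (rule image_eqI[rotated]) simp
    qed
    moreover have "nC d j \<in> fst ` tight d p" if j: "j \<in> S" for j
    proof -
      have j': "1 \<le> j" "j \<le> m" using j SS by auto
      have "phi m p j = psi m S j" using phi_pf[OF m f] j' unfolding p_def S_def by simp
      also have "\<dots> = 0" using psi_zero[OF SS] j by simp
      finally have "lval d (nC d j, real j * (real m + 1 - real j)) p = 0"
        by (simp add: lval_lin lin_nC[OF d j'] phi_def)
      hence "(nC d j, real j * (real m + 1 - real j)) \<in> tight d p"
        using mem_nC[OF d j'] unfolding tight_def by simp
      thus ?thesis by (rule image_eqI[rotated]) simp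
    qed
    moreover have "fst (eqc d) \<in> fst ` tight d p" unfolding tight_def by simp
    ultimately show ?thesis unfolding V_def by blast
  qed
  have fin: "finite KA" "finite KB" "finite S" using SS finite_subset unfolding KA_def KB_def by auto
  have cardV: "card V = pdim d"
  proof -
    have d1: "nAf m ` KA \<inter> nBf d m ` KB = {}"
    proof -
      { fix j j' assume j: "j \<in> KA" "j' \<in> KB" "nAf m j = nBf d m j'"
        have jj: "1 \<le> j" "j \<le> m" "1 \<le> j'" "j' \<le> m" using j(1,2) unfolding KA_def KB_def by auto
        have "nBf d m j' (m-1+j') = 1" using nBf_val2[OF jj(3,4)] .
        moreover have "m \<le> m-1+j'" using jj by simp
        hence "nAf m j (m-1+j') = 0" using nAf_val[OF jj(1,2)] by blast
        ultimately have False using j(3) by simp }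
      thus ?thesis by blast
    qed
    have A2: "\<And>v. v \<in> nAf m ` KA \<union> nBf d m ` KB \<Longrightarrow> v (2*m) = 0"
    proof -
      fix v assume "v \<in> nAf m ` KA \<union> nBf d m ` KB"
      then consider j where "j \<in> KA" "v = nAf m j" | j where "j \<in> KB" "v = nBf d m j" by blast
      thus "v (2*m) = 0"
      proof cases
        case 1 thus ?thesis using nAf_val2[of j] unfolding KA_def by simp
      next
        case 2 thus ?thesis using nBf_val[of j] unfolding KB_def by simp
      qed
    qed
    have C2: "\<And>v. v \<in> nC d ` S \<Longrightarrow> v (2*m) \<ge> 1"
    proof -
      fix v assume "v \<in> nC d ` S"
      then obtain j where j: "j \<in> S" "v = nC d j" by blast
      have "1 \<le> j" "j \<le> m" using j(1) SS by auto
      thus "v (2*m) \<ge> 1" using nC_val j(2) by simp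
    qed
    have d2: "(nAf m ` KA \<union> nBf d m ` KB) \<inter> nC d ` S = {}"
    proof (rule ccontr)
      assume "(nAf m ` KA \<union> nBf d m ` KB) \<inter> nC d ` S \<noteq> {}"
      then obtain v where v: "v \<in> nAf m ` KA \<union> nBf d m ` KB" "v \<in> nC d ` S" by blast
      have "v (2*m) = 0" by (rule A2[OF v(1)])
      moreover have "v (2*m) \<ge> 1" by (rule C2[OF v(2)])
      ultimately show False by simp
    qed
    have d3: "fst (eqc d) \<notin> nAf m ` KA \<union> nBf d m ` KB \<union> nC d ` S"
    proof
      assume h: "fst (eqc d) \<in> nAf m ` KA \<union> nBf d m ` KB \<union> nC d ` S"
      have "fst (eqc d) (2*m) \<ge> 0"
      proof (cases "fst (eqc d) \<in> nC d ` S")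
        case True
        have "fst (eqc d) (2*m) \<ge> 1" by (rule C2[OF True])
        thus ?thesis by simp
      next
        case False
        hence hh: "fst (eqc d) \<in> nAf m ` KA \<union> nBf d m ` KB" using h by blast
        show ?thesis using A2[OF hh] by simp
      qed
      thus False using eqc_val by simp
    qed
    have iA: "inj_on (nAf m) KA"
    proof (rule inj_onI)
      fix x y assume xy: "x \<in> KA" "y \<in> KA" "nAf m x = nAf m y"
      have "1 \<le> x" "x \<le> m" "1 \<le> y" "y \<le> m" using xy(1,2) unfolding KA_def by auto
      thus "x = y" using nAf_inj xy(3) by blast
    qed
    have iB: "inj_on (nBf d m) KB"
    proof (rule inj_onI)
      fix x y assume xy: "x \<in> KB" "y \<in> KB" "nBf d m x = nBf d m y"
      have "1 \<le> x" "x \<le> m" "1 \<le> y" "y \<le> m" using xy(1,2) unfolding KB_def by auto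
      thus "x = y" using nBf_inj xy(3) by blast
    qed
    have iC: "inj_on (nC d) S"
    proof (rule inj_onI)
      fix x y assume xy: "x \<in> S" "y \<in> S" "nC d x = nC d y"
      have "1 \<le> x" "x \<le> m" "1 \<le> y" "y \<le> m" using xy(1,2) SS by auto
      thus "x = y" using nC_inj xy(3) by blast
    qed
    have f1: "finite (nAf m ` KA)" "finite (nBf d m ` KB)" "finite (nC d ` S)" using fin by auto
    have c1: "card (nAf m ` KA \<union> nBf d m ` KB) = card KA + card KB"
      using card_Un_disjoint[OF f1(1) f1(2) d1] card_image[OF iA] card_image[OF iB] by simp
    have c2: "card (nAf m ` KA \<union> nBf d m ` KB \<union> nC d ` S) = card KA + card KB + card S"
      using card_Un_disjoint[OF _ f1(3) d2] f1 c1 card_image[OF iC] by simp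
    have "card V = card (nAf m ` KA \<union> nBf d m ` KB \<union> nC d ` S) + 1"
      unfolding V_def using d3 f1 by simp
    hence "card V = card KA + card KB + card S + 1" using c2 by simp
    moreover have "card KA = card {i\<in>{1..m}. f i \<noteq> 1}"
    proof (rule bij_betw_same_card)
      show "bij_betw (\<lambda>j. m+1-j) KA {i\<in>{1..m}. f i \<noteq> 1}"
      proof (rule bij_betw_byWitness[where f'="\<lambda>j. m+1-j"])
        show "\<forall>a\<in>KA. m + 1 - (m + 1 - a) = a" unfolding KA_def by auto
        show "\<forall>a\<in>{i\<in>{1..m}. f i \<noteq> 1}. m + 1 - (m + 1 - a) = a" by auto
        show "(\<lambda>j. m+1-j) ` KA \<subseteq> {i\<in>{1..m}. f i \<noteq> 1}" unfolding KA_def by auto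
        show "(\<lambda>j. m+1-j) ` {i\<in>{1..m}. f i \<noteq> 1} \<subseteq> KA"
        proof
          fix x assume "x \<in> (\<lambda>j. m+1-j) ` {i\<in>{1..m}. f i \<noteq> 1}"
          then obtain i where i: "i \<in> {1..m}" "f i \<noteq> 1" "x = m+1-i" by blast
          have "m + 1 - x = i" using i by auto
          thus "x \<in> KA" unfolding KA_def using i by auto
        qed
      qed
    qed
    moreover have "card {i\<in>{1..m}. f i \<noteq> 1} + card KB + card S = 2*m"
    proof -
      have "card {i\<in>{1..m}. f i \<noteq> 1} + card KB + card S =
        (\<Sum>i\<in>{1..m}. if f i \<noteq> 1 then 1 else 0) + (\<Sum>i\<in>{1..m}. if f i \<noteq> 2 then 1 else 0)
          + (\<Sum>i\<in>{1..m}. if f i \<noteq> 0 then 1 else 0)"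
        unfolding KB_def S_def Sf_def by (simp only: card_filter[OF finite_atLeastAtMost])
      also have "\<dots> = (\<Sum>i\<in>{1..m}. (if f i \<noteq> 1 then 1 else 0) + (if f i \<noteq> 2 then 1 else 0) + (if f i \<noteq> 0 then 1 else 0))"
        by (simp only: sum.distrib)
      also have "\<dots> = (\<Sum>i\<in>{1..m}. 2)"
        by (rule sum.cong) (use FF_vals[OF f] in auto)
      finally show ?thesis by simp
    qed
    ultimately show ?thesis using d by (simp add: pdim_def)
  qed
  have finV: "finite V" unfolding V_def using fin by simp
  have "lin_indep (pdim d) V"
    unfolding kernel_iff[OF finV cardV]
  proof (rule allI, rule impI)
    fix q assume H: "\<forall>v\<in>V. (\<Sum>i<pdim d. v i * q i) = 0"
    have Hl: "\<And>v. v \<in> V \<Longrightarrow> lin d v q = 0" using H unfolding lin_def by blast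
    have hA: "\<And>j. j \<in> KA \<Longrightarrow> Ac m q j = 0"
    proof -
      fix j assume j: "j \<in> KA"
      have "nAf m j \<in> V" using j unfolding V_def by blast
      hence "lin d (nAf m j) q = 0" by (rule Hl)
      moreover have "1 \<le> j" "j \<le> m" using j unfolding KA_def by auto
      ultimately show "Ac m q j = 0" using lin_nAf by simp
    qed
    have hB: "\<And>j. j \<in> KB \<Longrightarrow> Bc m q j = 0"
    proof -
      fix j assume j: "j \<in> KB"
      have "nBf d m j \<in> V" using j unfolding V_def by blast
      hence "lin d (nBf d m j) q = 0" by (rule Hl)
      moreover have "1 \<le> j" "j \<le> m" using j unfolding KB_def by auto
      ultimately show "Bc m q j = 0" using lin_nBf by simp
    qed
    have hC: "\<And>j. j \<in> S \<Longrightarrow> Cf m q j = 0"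
    proof -
      fix j assume j: "j \<in> S"
      have "nC d j \<in> V" using j unfolding V_def by blast
      hence "lin d (nC d j) q = 0" by (rule Hl)
      moreover have "1 \<le> j" "j \<le> m" using j SS by auto
      ultimately show "Cf m q j = 0" using lin_nC[OF d] by simp
    qed
    have hE: "eql m q = 0" using Hl[of "fst (eqc d)"] lin_eqc[OF d] unfolding V_def by simp
    have Cz: "\<forall>j\<le>m+1. Cf m q j = 0"
    proof (rule harm_zero[of "insert 0 (insert (m+1) S)"])
      show "\<forall>j\<in>insert 0 (insert (m + 1) S). j \<le> m + 1 \<longrightarrow> Cf m q j = 0"
        using hC hE Cf_top[of m q] by (auto simp: Cf_0)
      show "\<forall>j. 0 < j \<longrightarrow> j < m + 1 \<longrightarrow> j \<notin> insert 0 (insert (m + 1) S) \<longrightarrow>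
          Cf m q (j - 1) + Cf m q (j + 1) = 2 * Cf m q j"
      proof (intro allI impI)
        fix j assume j: "0 < j" "j < m+1" "j \<notin> insert 0 (insert (m + 1) S)"
        hence j': "1 \<le> j" "j \<le> m" "f j = 0" unfolding S_def Sf_def by auto
        have e: "m + 1 - (m + 1 - j) = j" using j' by simp
        have "m + 1 - j \<in> KA" "j \<in> KB" using j' e unfolding KA_def KB_def by auto
        hence "Ac m q (m+1-j) + Bc m q j = 0" using hA hB by simp
        thus "Cf m q (j - 1) + Cf m q (j + 1) = 2 * Cf m q j" using KI[OF j'(1,2), of q] by simp
      qed
    qed auto
    have AB: "\<And>j. 1 \<le> j \<Longrightarrow> j \<le> m \<Longrightarrow> Ac m q (m+1-j) = 0 \<and> Bc m q j = 0"
    proof -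
      fix j assume j: "1 \<le> j" "j \<le> m"
      have s: "Ac m q (m+1-j) + Bc m q j = 0" using KI[OF j, of q] Cz j by simp
      have e: "m + 1 - (m + 1 - j) = j" using j by simp
      have "m+1-j \<in> KA \<or> j \<in> KB" using j e FF_vals[OF f, of j] unfolding KA_def KB_def by auto
      thus "Ac m q (m+1-j) = 0 \<and> Bc m q j = 0" using s hA hB by auto
    qed
    have Aq: "\<And>k. 1 \<le> k \<Longrightarrow> k \<le> m \<Longrightarrow> Ac m q k = 0"
    proof -
      fix k assume k: "1 \<le> k" "k \<le> m"
      have "m + 1 - (m + 1 - k) = k" using k by simp
      thus "Ac m q k = 0" using AB[of "m+1-k"] k by simp
    qed
    have Xq: "\<And>j. 1 \<le> j \<Longrightarrow> j \<le> m \<Longrightarrow> Xc m q j = 0"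
    proof -
      fix j assume j: "1 \<le> j" "j \<le> m"
      have "Xc m q j = (\<Sum>k\<in>{j..m}. Ac m q k)" using X_tele j by simp
      also have "\<dots> = 0" by (rule sum.neutral) (use j Aq in auto)
      finally show "Xc m q j = 0" .
    qed
    have Yq: "\<And>j. 1 \<le> j \<Longrightarrow> j \<le> m \<Longrightarrow> Yc m q j = 0"
    proof -
      fix j assume j: "1 \<le> j" "j \<le> m"
      have "Yc m q j = (\<Sum>k\<in>{j..m}. Bc m q k)" using Y_tele j by simp
      also have "\<dots> = 0" by (rule sum.neutral) (use j AB in auto)
      finally show "Yc m q j = 0" .
    qed
    have Zq: "Zc m q = 0" using Cz Cf_1[of m q] Yq[of 1] m by simp
    show "\<forall>i<pdim d. q i = 0"
    proof (intro allI impI)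
      fix i assume "i < pdim d"
      hence i: "i < 2*m+1" using d by (simp add: pdim_def)
      show "q i = 0" unfolding q_coords[OF i m] using Xq Yq Zq i by auto
    qed
  qed
  thus ?thesis using pP Vsub cardV unfolding vertices_def p_def by blast
qed

end


theorem theorem5p20:
  fixes d :: nat
  assumes "d \<ge> 3"
  shows "(\<exists>M. \<forall>p\<in>Pd d. \<forall>i. \<bar>p i\<bar> \<le> M)
       \<and> (\<forall>v\<in>vertices d. \<forall>i. v i \<in> \<int>)
       \<and> finite (vertices d) \<and> card (vertices d) = 3 ^ (d - 2)"
proof -
  define m where "m = d - 2"
  have d: "d = m+2" and m: "m \<ge> 1" using assms unfolding m_def by auto
  have V: "vertices d = pf m ` FF m"
  proof
    show "vertices d \<subseteq> pf m ` FF m"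
    proof
      fix p assume p: "p \<in> vertices d"
      have pP: "p \<in> Pd d" using p unfolding vertices_def by blast
      obtain f where "f \<in> FF m" "p = pf m f" using vert_form[OF d m pP vert_rigid[OF d p]] by blast
      thus "p \<in> pf m ` FF m" by blast
    qed
    show "pf m ` FF m \<subseteq> vertices d" using pf_vertex[OF d m] by blast
  qed
  have finF: "finite (FF m)" unfolding FF_def by (rule finite_PiE) auto
  have cardF: "card (FF m) = 3 ^ m"
  proof -
    have "card (FF m) = (\<Prod>i\<in>{1..m}. card {0,1,2::nat})" unfolding FF_def by (rule card_PiE) auto
    also have "\<dots> = 3 ^ m" by (simp add: numeral_3_eq_3)
    finally show ?thesis .
  qed
  have b: "\<exists>M. \<forall>p\<in>Pd d. \<forall>i. \<bar>p i\<bar> \<le> M"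
    using Pd_bound[OF d m] by blast
  have i: "\<forall>v\<in>vertices d. \<forall>i. v i \<in> \<int>" unfolding V using pf_int[OF m] by blast
  have f: "finite (vertices d)" unfolding V using finF by simp
  have "card (vertices d) = card (FF m)" unfolding V by (rule card_image[OF pf_inj[OF m]])
  hence c: "card (vertices d) = 3 ^ (d - 2)" using cardF unfolding m_def by simp
  show ?thesis using b i f c by blast
qed

end
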